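(* Let $\Omega\subset\mathbb{R}^3$ be a bounded convex domain with $C^2$ boundary of everywhere positive Gaussian curvature. There is a constant $C=C(\Omega)$ such that for every $y\in\Omega$ and every unit vector $\hat v\in\mathbb{S}^2$: $$\int_0^{|q_+(y,\hat v)-y|} d_{y+r\hat v}^{-\frac12+\epsilon}\,dr\le C\quad\text{for all }\epsilon\in[0,\tfrac12),$$ and $$\int_0^{|q_+(y,\hat v)-y|} d_{y+r\hat v}^{-1+\epsilon}\,dr\le \frac{C}{\epsilon}\,d_y^{-\frac12+\epsilon}\quad\text{for all }\epsilon\in(0,\tfrac12).$$
   Context: $d_x=\operatorname{dist}(x,\partial\Omega)$. $\tau_+(y,v)=\inf\{t>0: y+tv\notin\Omega\}$, $q_+(y,v)=y+\tau_+(y,v)v$. *)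

theory Defs
  imports "HOL-Analysis.Analysis"
begin

text \<open>Cofactor (i,j) of a 3x3 matrix (indices of type 3 are taken mod 3).\<close>
definition cof3 :: "real^3^3 \<Rightarrow> 3 \<Rightarrow> 3 \<Rightarrow> real" where
  "cof3 A i j = A$(i+1)$(j+1) * A$(i+2)$(j+2) - A$(i+1)$(j+2) * A$(i+2)$(j+1)"

text \<open>Gaussian curvature of a level surface {rho = c} at a point where the gradient of rho
  is g and the Hessian of rho is H (standard implicit formula:
  K = g^T adj(H) g / |g|^4 = - det [[H, g],[g^T, 0]] / |g|^4).\<close>
definition level_gauss_curvature :: "real^3 \<Rightarrow> real^3^3 \<Rightarrow> real" where
  "level_gauss_curvature g H = (\<Sum>i\<in>UNIV. \<Sum>j\<in>UNIV. g$i * g$j * cof3 H i j) / norm g ^ 4"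

definition C2_defining_function ::
  "(real^3) set \<Rightarrow> (real^3) set \<Rightarrow> (real^3 \<Rightarrow> real) \<Rightarrow> (real^3 \<Rightarrow> real^3) \<Rightarrow> (real^3 \<Rightarrow> real^3^3) \<Rightarrow> bool" where
  "C2_defining_function \<Omega> U \<rho> grad hess \<longleftrightarrow>
     open U \<and> frontier \<Omega> \<subseteq> U \<and>
     (\<forall>x\<in>U. (\<rho> has_derivative (\<lambda>h. grad x \<bullet> h)) (at x)) \<and>
     (\<forall>x\<in>U. (grad has_derivative (\<lambda>h. hess x *v h)) (at x)) \<and>
     continuous_on U hess \<and>
     (\<forall>x\<in>U. x \<in> \<Omega> \<longleftrightarrow> \<rho> x < 0) \<and>
     (\<forall>x\<in>frontier \<Omega>. grad x \<noteq> 0)"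

definition C2_boundary_pos_gauss :: "(real^3) set \<Rightarrow> bool" where
  "C2_boundary_pos_gauss \<Omega> \<longleftrightarrow>
     (\<exists>U \<rho> grad hess. C2_defining_function \<Omega> U \<rho> grad hess \<and>
        (\<forall>x\<in>frontier \<Omega>. level_gauss_curvature (grad x) (hess x) > 0))"

definition bdist :: "(real^3) set \<Rightarrow> real^3 \<Rightarrow> real" where
  "bdist \<Omega> x = infdist x (frontier \<Omega>)"

definition tau_plus :: "(real^3) set \<Rightarrow> real^3 \<Rightarrow> real^3 \<Rightarrow> real" where
  "tau_plus \<Omega> y v = Inf {t. t > 0 \<and> y + t *\<^sub>R v \<notin> \<Omega>}"

definition q_plus :: "(real^3) set \<Rightarrow> real^3 \<Rightarrow> real^3 \<Rightarrow> real^3" where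
  "q_plus \<Omega> y v = y + tau_plus \<Omega> y v *\<^sub>R v"

end

theory Submission
  imports Defs
begin


lemma tent_has_integral:
  fixes lo hi a :: real
  assumes "lo < hi" "-1 < a"
  shows "((\<lambda>r. (hi - r) powr a + (r - lo) powr a) has_integral
           (2 * (hi - lo) powr (a+1) / (a+1))) {lo..hi}"
proof -
  define F where "F r = ((r - lo) powr (a+1) - (hi - r) powr (a+1)) / (a+1)" for r
  have c: "continuous_on {lo..hi} F"
    unfolding F_def
    by (intro continuous_intros continuous_on_powr') (use assms in auto)
  have d: "(F has_vector_derivative ((hi - x) powr a + (x - lo) powr a)) (at x)"
    if "x \<in> {lo<..<hi}" for x
  proof -
    have "((\<lambda>r. (r - lo) powr (a+1)) has_real_derivative (a+1) * (x - lo) powr (a+1 - real 1) * 1) (at x)"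
      by (rule DERIV_fun_powr) (use that in \<open>auto intro!: derivative_eq_intros\<close>)
    moreover have "((\<lambda>r. (hi - r) powr (a+1)) has_real_derivative (a+1) * (hi - x) powr (a+1 - real 1) * (-1)) (at x)"
      by (rule DERIV_fun_powr) (use that in \<open>auto intro!: derivative_eq_intros\<close>)
    ultimately have "(F has_real_derivative ((a+1) * (x - lo) powr (a+1 - real 1) * 1 - (a+1) * (hi - x) powr (a+1 - real 1) * (-1)) / (a+1)) (at x)"
      unfolding F_def by (intro DERIV_cdivide DERIV_diff)
    moreover have "((a+1) * (x - lo) powr (a+1 - real 1) * 1 - (a+1) * (hi - x) powr (a+1 - real 1) * (-1)) / (a+1)
        = (hi - x) powr a + (x - lo) powr a" using assms by (simp add: field_simps)
    ultimately show ?thesis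
      by (simp add: has_real_derivative_iff_has_vector_derivative[symmetric])
  qed
  have "((\<lambda>r. (hi - r) powr a + (r - lo) powr a) has_integral (F hi - F lo)) {lo..hi}"
    by (rule fundamental_theorem_of_calculus_interior) (use assms c d in auto)
  moreover have "F hi - F lo = 2 * (hi - lo) powr (a+1) / (a+1)"
  proof -
    have "F hi = (hi-lo) powr (a+1)/(a+1)" "F lo = - ((hi-lo) powr (a+1)/(a+1))"
      unfolding F_def using assms by auto
    thus ?thesis by simp
  qed
  ultimately show ?thesis by simp
qed

lemma tent_integral:
  fixes lo hi A a :: real and g :: "real \<Rightarrow> real"
  assumes "lo < 0" "0 < hi" "A > 0" "-1 < a" "a < 0"
    and low: "\<And>r. 0 \<le> r \<Longrightarrow> r < hi \<Longrightarrow> A * min (hi - r) (r - lo) \<le> g r"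
    and ghi: "g hi = 0"
  shows "(\<integral>\<^sup>+ r. indicator {0..hi} r * ennreal (g r powr a) \<partial>lborel)
          \<le> ennreal (A powr a * (2 * (hi - lo) powr (a+1) / (a+1)))"
proof -
  have pw: "indicator {0..hi} r * ennreal (g r powr a)
      \<le> ennreal (indicator {lo..hi} r * (A powr a * ((hi - r) powr a + (r - lo) powr a)))" for r
  proof (cases "0 \<le> r \<and> r < hi")
    case True
    define m where "m = min (hi - r) (r - lo)"
    have m0: "m > 0" using True assms unfolding m_def by auto
    have "g r powr a \<le> (A * m) powr a"
      by (rule powr_mono2') (use assms m0 low True m_def in auto)
    also have "\<dots> = A powr a * m powr a" using m0 assms by (simp add: powr_mult)
    also have "m powr a \<le> (hi - r) powr a + (r - lo) powr a"
      unfolding m_def by (auto simp: min_def)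
    hence "A powr a * m powr a \<le> A powr a * ((hi - r) powr a + (r - lo) powr a)"
      by (simp add: mult_left_mono)
    finally show ?thesis using True assms
      by (auto simp: indicator_def intro!: ennreal_leI)
  next
    case False
    then show ?thesis using ghi by (auto simp: indicator_def)
  qed
  have "(\<integral>\<^sup>+ r. indicator {0..hi} r * ennreal (g r powr a) \<partial>lborel)
     \<le> (\<integral>\<^sup>+ r. ennreal (indicator {lo..hi} r * (A powr a * ((hi - r) powr a + (r - lo) powr a))) \<partial>lborel)"
    by (intro nn_integral_mono pw)
  also have "\<dots> = ennreal (A powr a * (2 * (hi - lo) powr (a+1) / (a+1)))"
  proof (rule nn_integral_has_integral_lebesgue)
    show "((\<lambda>r. A powr a * ((hi - r) powr a + (r - lo) powr a)) has_integral
       A powr a * (2 * (hi - lo) powr (a+1) / (a+1))) {lo..hi}"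
      by (rule has_integral_mult_right, rule tent_has_integral) (use assms in auto)
  qed (use assms in auto)
  finally show ?thesis .
qed



lemma ball_le_bdist:
  assumes "open \<Omega>" "frontier \<Omega> \<noteq> {}" "ball c R \<subseteq> \<Omega>"
  shows "R \<le> bdist \<Omega> c"
proof -
  have "R \<le> dist c f" if "f \<in> frontier \<Omega>" for f
  proof (rule ccontr)
    assume "\<not> R \<le> dist c f"
    hence "f \<in> \<Omega>" using assms(3) by auto
    moreover have "f \<notin> \<Omega>" using that assms(1) by (simp add: frontier_def interior_open)
    ultimately show False by simp
  qed
  thus ?thesis unfolding bdist_def using assms(2)
    by (simp add: infdist_notempty cINF_greatest)
qed

lemma bdist_ball:
  assumes "open \<Omega>" "c \<in> \<Omega>"
  shows "ball c (bdist \<Omega> c) \<subseteq> \<Omega>"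
proof (rule ccontr)
  assume "\<not> ?thesis"
  then obtain z where z: "z \<in> ball c (bdist \<Omega> c)" "z \<notin> \<Omega>" by blast
  have cb: "c \<in> ball c (bdist \<Omega> c)" using z by (auto simp: dist_commute) (smt (verit) zero_le_dist)
  have "ball c (bdist \<Omega> c) \<inter> frontier \<Omega> \<noteq> {}"
    by (rule connected_Int_frontier) (use z assms cb in blast)+
  then obtain f where f: "f \<in> frontier \<Omega>" "dist c f < bdist \<Omega> c" by auto
  have "bdist \<Omega> c \<le> dist c f" unfolding bdist_def using f(1) by (rule infdist_le)
  with f show False by simp
qed

lemma bdist_pos:
  assumes "open \<Omega>" "c \<in> \<Omega>" "frontier \<Omega> \<noteq> {}"
  shows "bdist \<Omega> c > 0"
proof -
  have "c \<notin> frontier \<Omega>" using assms by (simp add: frontier_def interior_open)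
  thus ?thesis unfolding bdist_def using assms by (intro infdist_pos_not_in_closed) auto
qed

lemma ball_convex_comb:
  fixes \<Omega> :: "(real^3) set"
  assumes "convex \<Omega>" "open \<Omega>" "ball m R \<subseteq> \<Omega>" "e \<in> closure \<Omega>" "0 < t" "t \<le> 1"
  shows "ball (t *\<^sub>R m + (1 - t) *\<^sub>R e) (t * R) \<subseteq> \<Omega>"
proof
  fix z assume z: "z \<in> ball (t *\<^sub>R m + (1 - t) *\<^sub>R e) (t * R)"
  define m' where "m' = (1/t) *\<^sub>R (z - (1 - t) *\<^sub>R e)"
  have zm: "z = t *\<^sub>R m' + (1 - t) *\<^sub>R e" unfolding m'_def using assms(5) by (simp add: algebra_simps)
  have "dist m m' = (1/t) * dist (t *\<^sub>R m + (1 - t) *\<^sub>R e) z"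
  proof -
    have "m - m' = (1/t) *\<^sub>R ((t *\<^sub>R m + (1 - t) *\<^sub>R e) - z)"
      unfolding m'_def using assms(5) by (simp add: algebra_simps)
    thus ?thesis using assms(5) by (simp add: dist_norm)
  qed
  also have "\<dots> < R" using z assms(5) by (simp add: pos_divide_less_eq mult.commute)
  finally have m'\<Omega>: "m' \<in> \<Omega>" using assms(3) by auto
  show "z \<in> \<Omega>"
  proof (cases "t = 1 \<or> m' = e")
    case True
    then show ?thesis using zm m'\<Omega> by (auto simp: algebra_simps)
  next
    case False
    have "z \<in> open_segment m' e"
      using False assms(5,6) zm unfolding open_segment_def closed_segment_def
      by (auto intro!: exI[of _ "1 - t"] simp: algebra_simps)
    moreover have "open_segment m' e \<subseteq> interior \<Omega>"
      by (rule in_interior_closure_convex_segment) (use assms m'\<Omega> in \<open>auto simp: interior_open\<close>)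
    ultimately show ?thesis using assms(2) by (auto simp: interior_open)
  qed
qed

lemma chord:
  fixes \<Omega> :: "(real^3) set"
  assumes "open \<Omega>" "bounded \<Omega>" "y \<in> \<Omega>" "norm v = 1"
  shows "tau_plus \<Omega> y v > 0" "y + tau_plus \<Omega> y v *\<^sub>R v \<in> frontier \<Omega>"
    "\<And>t. 0 \<le> t \<Longrightarrow> t < tau_plus \<Omega> y v \<Longrightarrow> y + t *\<^sub>R v \<in> \<Omega>"
proof -
  obtain e where e: "e > 0" "ball y e \<subseteq> \<Omega>" using assms openE by blast
  define T where "T = {t. t > 0 \<and> y + t *\<^sub>R v \<notin> \<Omega>}"
  have Te: "t \<ge> e" if "t \<in> T" for t
  proof (rule ccontr)
    assume "\<not> t \<ge> e"
    hence "y + t *\<^sub>R v \<in> ball y e" using that assms(4) unfolding T_def by (auto simp: dist_norm)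
    with e that show False unfolding T_def by auto
  qed
  obtain B where B: "\<forall>x\<in>\<Omega>. norm x \<le> B" using assms(2) bounded_iff by blast
  have "B + norm y + 1 \<in> T"
  proof -
    have Bp: "B \<ge> 0" using B assms(3) norm_ge_zero order_trans by blast
    have "norm ((B + norm y + 1) *\<^sub>R v) = B + norm y + 1" using assms(4) Bp by simp
    hence "norm (y + (B + norm y + 1) *\<^sub>R v) \<ge> B + 1"
      using norm_triangle_ineq2[of "(B + norm y + 1) *\<^sub>R v" "-y"] by (simp add: algebra_simps)
    moreover have "y + (B + norm y + 1) *\<^sub>R v \<notin> \<Omega>"
    proof
      assume "y + (B + norm y + 1) *\<^sub>R v \<in> \<Omega>"
      hence "norm (y + (B + norm y + 1) *\<^sub>R v) \<le> B" using B by blast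
      with calculation show False by linarith
    qed
    ultimately show ?thesis unfolding T_def using Bp by (simp add: add_nonneg_pos)
  qed
  hence Tne: "T \<noteq> {}" by auto
  have Teq: "T = {e..} \<inter> (\<lambda>t. y + t *\<^sub>R v) -` (- \<Omega>)"
    using Te e unfolding T_def by force
  have "closed T" unfolding Teq
    by (intro closed_Int closed_vimage closed_atLeast) (use assms(1) in \<open>auto intro!: continuous_intros\<close>)
  hence \<tau>T: "tau_plus \<Omega> y v \<in> T" unfolding tau_plus_def T_def[symmetric]
    using Tne by (intro closed_contains_Inf) (auto simp: bdd_below_def T_def intro: less_imp_le)
  show \<tau>pos: "tau_plus \<Omega> y v > 0" using \<tau>T unfolding T_def by auto
  show inside: "y + t *\<^sub>R v \<in> \<Omega>" if "0 \<le> t" "t < tau_plus \<Omega> y v" for t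
  proof (cases "t = 0")
    case True then show ?thesis using assms by simp
  next
    case False
    have "t \<notin> T"
    proof
      assume "t \<in> T"
      hence "tau_plus \<Omega> y v \<le> t" unfolding tau_plus_def T_def[symmetric]
        by (intro cInf_lower) (auto simp: bdd_below_def T_def intro: less_imp_le)
      with that show False by simp
    qed
    thus ?thesis using that False unfolding T_def by auto
  qed
  let ?q = "y + tau_plus \<Omega> y v *\<^sub>R v"
  have "?q \<in> closure \<Omega>"
    unfolding closure_approachable
  proof (intro allI impI)
    fix d :: real assume d: "d > 0"
    define t where "t = tau_plus \<Omega> y v - min d (tau_plus \<Omega> y v) / 2"
    have "y + t *\<^sub>R v \<in> \<Omega>" by (rule inside) (use d \<tau>pos in \<open>auto simp: t_def\<close>)
    moreover have "dist (y + t *\<^sub>R v) ?q < d"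
    proof -
      have "?q - (y + t *\<^sub>R v) = (min d (tau_plus \<Omega> y v) / 2) *\<^sub>R v"
        by (simp add: t_def algebra_simps)
      hence "dist (y + t *\<^sub>R v) ?q = norm ((min d (tau_plus \<Omega> y v) / 2) *\<^sub>R v)"
        by (metis dist_norm dist_commute)
      thus ?thesis using assms(4) d \<tau>pos by simp (smt (verit) min_def)
    qed
    ultimately show "\<exists>x\<in>\<Omega>. dist x ?q < d" by blast
  qed
  moreover have "?q \<notin> \<Omega>" using \<tau>T unfolding T_def by auto
  ultimately show "?q \<in> frontier \<Omega>" using assms(1) by (simp add: frontier_def interior_open)
qed




lemma alg2:
  fixes A L \<delta> \<kappa> \<epsilon> :: real
  assumes "A > 0" "L > 0" "\<delta> > 0" "\<kappa> > 0" "0 < \<epsilon>" "\<epsilon> < 1/2"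
    and "A * L \<ge> \<delta>" "A * L \<ge> \<kappa> * L^2"
  shows "A powr (-1+\<epsilon>) * L powr \<epsilon> \<le> \<kappa> powr (-1/2) * \<delta> powr (-1/2+\<epsilon>)"
proof -
  have AL: "A * L > 0" using assms by simp
  have Le: "L powr \<epsilon> = L powr (-1+\<epsilon>) * L" using powr_add[of L "-1+\<epsilon>" 1] assms by simp
  have "A powr (-1+\<epsilon>) * L powr \<epsilon> = (A * L) powr (-1+\<epsilon>) * L"
    using assms by (simp add: powr_mult Le)
  also have "(A * L) powr (-1+\<epsilon>) = (A * L) powr (-1/2+\<epsilon>) * (A * L) powr (-1/2)"
    using AL by (simp add: powr_add[symmetric])
  finally have e1: "A powr (-1+\<epsilon>) * L powr \<epsilon> = (A * L) powr (-1/2+\<epsilon>) * (A * L) powr (-1/2) * L" .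
  have i1: "(A * L) powr (-1/2+\<epsilon>) \<le> \<delta> powr (-1/2+\<epsilon>)"
    by (rule powr_mono2') (use assms in auto)
  have i2: "(A * L) powr (-1/2) \<le> (\<kappa> * L^2) powr (-1/2)"
    by (rule powr_mono2') (use assms in auto)
  have e2: "(\<kappa> * L^2) powr (-1/2) = \<kappa> powr (-1/2) / L"
  proof -
    have "(\<kappa> * L^2) powr (-1/2) = \<kappa> powr (-1/2) * (L powr 2) powr (-1/2)"
      using assms by (simp add: powr_mult powr_realpow)
    also have "(L powr 2) powr (-1/2) = L powr (-1)" by (simp add: powr_powr)
    finally show ?thesis using assms by simp
  qed
  have "(A * L) powr (-1/2+\<epsilon>) * (A * L) powr (-1/2) \<le> \<delta> powr (-1/2+\<epsilon>) * (\<kappa> powr (-1/2) / L)"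
    using i1 i2 e2 by (intro mult_mono) auto
  hence "(A * L) powr (-1/2+\<epsilon>) * (A * L) powr (-1/2) * L \<le> \<delta> powr (-1/2+\<epsilon>) * (\<kappa> powr (-1/2) / L) * L"
    using assms(2) by (rule mult_right_mono[OF _ less_imp_le])
  with e1 show ?thesis using assms by (simp add: ac_simps)
qed

lemma alg1:
  fixes \<kappa> L D \<epsilon> :: real
  assumes "0 < \<kappa>" "\<kappa> \<le> 1/2" "0 \<le> \<epsilon>" "\<epsilon> < 1/2" "0 < L" "L \<le> D" "1 \<le> D"
  shows "(2*\<kappa>*L) powr (-1/2+\<epsilon>) * (2 * L powr (-1/2+\<epsilon>+1) / (-1/2+\<epsilon>+1))
      \<le> 4 * (2*\<kappa>) powr (-1/2) * D"
proof -
  have "(2*\<kappa>*L) powr (-1/2+\<epsilon>) * L powr (-1/2+\<epsilon>+1) = (2*\<kappa>) powr (-1/2+\<epsilon>) * L powr (2*\<epsilon>)"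
    using assms by (simp add: powr_mult mult.assoc powr_add[symmetric])
  also have "(2*\<kappa>) powr (-1/2+\<epsilon>) \<le> (2*\<kappa>) powr (-1/2)"
    by (rule powr_mono') (use assms in auto)
  also have "L powr (2*\<epsilon>) \<le> D powr (2*\<epsilon>)"
    by (rule powr_mono2) (use assms in auto)
  also have "D powr (2*\<epsilon>) \<le> D powr 1"
    by (rule powr_mono) (use assms in auto)
  finally have 1: "(2*\<kappa>*L) powr (-1/2+\<epsilon>) * L powr (-1/2+\<epsilon>+1) \<le> (2*\<kappa>) powr (-1/2) * D"
    using assms by (auto intro!: mult_mono)
  have 2: "2 / (-1/2+\<epsilon>+1) \<le> 4" using assms by (simp add: field_simps)
  have "(2*\<kappa>*L) powr (-1/2+\<epsilon>) * (2 * L powr (-1/2+\<epsilon>+1) / (-1/2+\<epsilon>+1))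
      = ((2*\<kappa>*L) powr (-1/2+\<epsilon>) * L powr (-1/2+\<epsilon>+1)) * (2 / (-1/2+\<epsilon>+1))" by simp
  also have "\<dots> \<le> ((2*\<kappa>) powr (-1/2) * D) * 4"
    by (rule mult_mono[OF 1 2]) (use assms in auto)
  finally show ?thesis by simp
qed



lemma frontier_subset_closure: "frontier S \<subseteq> closure S"
  by (auto simp: frontier_def)

lemma comb_eq: "t *\<^sub>R (y + a *\<^sub>R v) + (1-t) *\<^sub>R (y + b *\<^sub>R v) = y + (t*a + (1-t)*b) *\<^sub>R (v::real^3)"
  by (simp add: algebra_simps)

lemma main_from_UC:
  fixes \<Omega> :: "(real^3) set"
  assumes op: "open \<Omega>" and bd: "bounded \<Omega>" and cv: "convex \<Omega>" and ne: "\<Omega> \<noteq> {}"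
    and k0: "\<kappa> > 0"
    and UC: "\<And>p q. p \<in> frontier \<Omega> \<Longrightarrow> q \<in> frontier \<Omega> \<Longrightarrow> ball ((1/2) *\<^sub>R (p + q)) (\<kappa> * (dist p q)^2) \<subseteq> \<Omega>"
  shows "\<exists>C::real. \<forall>y\<in>\<Omega>. \<forall>v::real^3. norm v = 1 \<longrightarrow>
     (\<forall>\<epsilon>::real. 0 \<le> \<epsilon> \<and> \<epsilon> < 1/2 \<longrightarrow>
        (\<integral>\<^sup>+ r. indicator {0..norm (q_plus \<Omega> y v - y)} r *
            ennreal (bdist \<Omega> (y + r *\<^sub>R v) powr (-1/2 + \<epsilon>)) \<partial>lborel) \<le> ennreal C) \<and>
     (\<forall>\<epsilon>::real. 0 < \<epsilon> \<and> \<epsilon> < 1/2 \<longrightarrow>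
        (\<integral>\<^sup>+ r. indicator {0..norm (q_plus \<Omega> y v - y)} r *
            ennreal (bdist \<Omega> (y + r *\<^sub>R v) powr (-1 + \<epsilon>)) \<partial>lborel)
          \<le> ennreal (C / \<epsilon> * bdist \<Omega> y powr (-1/2 + \<epsilon>)))"
proof -
  obtain y0 where y0: "y0 \<in> \<Omega>" using ne by auto
  have "y0 + tau_plus \<Omega> y0 (axis 1 1) *\<^sub>R axis 1 1 \<in> frontier \<Omega>"
    by (rule chord(2)) (use op bd y0 in auto)
  hence Fne: "frontier \<Omega> \<noteq> {}" by auto
  have "bounded (frontier \<Omega>)"
    using bd bounded_closure bounded_subset frontier_subset_closure by blast
  then obtain D0 where D0: "\<And>p q. p \<in> frontier \<Omega> \<Longrightarrow> q \<in> frontier \<Omega> \<Longrightarrow> dist p q \<le> D0"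
    unfolding bounded_two_points by blast
  define D where "D = max 1 D0"
  define k where "k = min \<kappa> (1/2)"
  have k: "0 < k" "k \<le> 1/2" "k \<le> \<kappa>" using k0 by (auto simp: k_def)
  define C where "C = max (4 * (2*k) powr (-1/2) * D) (2 * k powr (-1/2))"
  show ?thesis
  proof (intro exI[of _ C] ballI allI impI, rule conjI)
    fix y and v :: "real^3"
    assume y: "y \<in> \<Omega>" and v: "norm v = 1"
    define \<tau> where "\<tau> = tau_plus \<Omega> y v"
    define \<sigma> where "\<sigma> = tau_plus \<Omega> y (-v)"
    have v': "norm (-v) = 1" using v by simp
    have \<tau>0: "\<tau> > 0" unfolding \<tau>_def by (rule chord(1)) (use op bd y v in auto)
    have \<sigma>0: "\<sigma> > 0" unfolding \<sigma>_def by (rule chord(1)) (use op bd y v' in auto)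
    define q where "q = y + \<tau> *\<^sub>R v"
    define p where "p = y + (-\<sigma>) *\<^sub>R v"
    have qF: "q \<in> frontier \<Omega>" unfolding q_def \<tau>_def by (rule chord(2)) (use op bd y v in auto)
    have pF: "p \<in> frontier \<Omega>" unfolding p_def \<sigma>_def using chord(2)[OF op bd y v'] by simp
    have qC: "q \<in> closure \<Omega>" and pC: "p \<in> closure \<Omega>"
      using qF pF frontier_subset_closure by auto
    define L where "L = \<tau> + \<sigma>"
    have L0: "L > 0" using \<tau>0 \<sigma>0 L_def by simp
    have dpq: "dist p q = L"
    proof -
      have "q - p = L *\<^sub>R v" by (simp add: p_def q_def L_def algebra_simps)
      hence "dist p q = norm (L *\<^sub>R v)" by (metis dist_norm dist_commute)
      thus ?thesis using v L0 by simp
    qed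
    have LD: "L \<le> D" using D0[OF pF qF] dpq D_def by simp
    define rm where "rm = (\<tau> - \<sigma>)/2"
    have mid: "(1/2) *\<^sub>R (p + q) = y + rm *\<^sub>R v"
      by (simp add: p_def q_def rm_def vec_eq_iff field_simps)
    have ballm: "ball (y + rm *\<^sub>R v) (k * L^2) \<subseteq> \<Omega>"
    proof -
      have "ball (y + rm *\<^sub>R v) (k * L^2) \<subseteq> ball (y + rm *\<^sub>R v) (\<kappa> * L^2)"
        using k by (intro subset_ball mult_right_mono) auto
      thus ?thesis using UC[OF pF qF] mid dpq by auto
    qed
    have normq: "norm (q_plus \<Omega> y v - y) = \<tau>"
      using v \<tau>0 by (simp add: q_plus_def \<tau>_def)
    define g where "g r = bdist \<Omega> (y + r *\<^sub>R v)" for r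
    have ghi: "g \<tau> = 0" unfolding g_def bdist_def using qF q_def by (simp add: infdist_zero)
    have tent: "2*k*L * min (\<tau> - r) (r - (-\<sigma>)) \<le> g r" if r: "0 \<le> r" "r < \<tau>" for r
    proof (cases "r \<ge> rm")
      case True
      define t where "t = 2*(\<tau> - r)/L"
      have t: "0 < t" "t \<le> 1" using r True L0 by (auto simp: t_def rm_def L_def field_simps)
      have eq: "t *\<^sub>R (y + rm *\<^sub>R v) + (1-t) *\<^sub>R q = y + r *\<^sub>R v"
      proof -
        have "t*rm + (1-t)*\<tau> = \<tau> - t*(\<tau> - rm)" by (simp add: algebra_simps)
        also have "\<tau> - rm = L/2" by (simp add: rm_def L_def field_simps)
        also have "t*(L/2) = \<tau> - r" using L0 by (simp add: t_def)
        finally have "t*rm + (1-t)*\<tau> = r" by simp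
        thus ?thesis unfolding q_def comb_eq by simp
      qed
      have "ball (y + r *\<^sub>R v) (t * (k * L^2)) \<subseteq> \<Omega>"
        using ball_convex_comb[OF cv op ballm qC t] eq by simp
      hence "t * (k * L^2) \<le> g r" unfolding g_def by (rule ball_le_bdist[OF op Fne])
      moreover have "t * (k * L^2) = 2*k*L * (\<tau> - r)" using L0 by (simp add: t_def power2_eq_square)
      ultimately show ?thesis using k L0
        by (smt (verit) min.cobounded1 mult_left_mono mult_pos_pos)
    next
      case False
      define t where "t = 2*(r + \<sigma>)/L"
      have t: "0 < t" "t \<le> 1" using r False L0 \<sigma>0 by (auto simp: t_def rm_def L_def field_simps)
      have eq: "t *\<^sub>R (y + rm *\<^sub>R v) + (1-t) *\<^sub>R p = y + r *\<^sub>R v"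
      proof -
        have "t*rm + (1-t)*(-\<sigma>) = -\<sigma> + t*(rm + \<sigma>)" by (simp add: algebra_simps)
        also have "rm + \<sigma> = L/2" by (simp add: rm_def L_def field_simps)
        also have "t*(L/2) = r + \<sigma>" using L0 by (simp add: t_def)
        finally have "t*rm + (1-t)*(-\<sigma>) = r" by simp
        thus ?thesis unfolding p_def comb_eq by simp
      qed
      have "ball (y + r *\<^sub>R v) (t * (k * L^2)) \<subseteq> \<Omega>"
        using ball_convex_comb[OF cv op ballm pC t] eq by simp
      hence "t * (k * L^2) \<le> g r" unfolding g_def by (rule ball_le_bdist[OF op Fne])
      moreover have "t * (k * L^2) = 2*k*L * (r - (-\<sigma>))" using L0 by (simp add: t_def power2_eq_square)
      ultimately show ?thesis using k L0
        by (smt (verit) min.cobounded2 mult_left_mono mult_pos_pos)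
    qed
    have lomid: "-\<sigma> < 0" using \<sigma>0 by simp
    have A0: "2*k*L > 0" using k L0 by simp
    show part1: "\<forall>\<epsilon>::real. 0 \<le> \<epsilon> \<and> \<epsilon> < 1/2 \<longrightarrow>
        (\<integral>\<^sup>+ r. indicator {0..norm (q_plus \<Omega> y v - y)} r *
            ennreal (bdist \<Omega> (y + r *\<^sub>R v) powr (-1/2 + \<epsilon>)) \<partial>lborel) \<le> ennreal C"
    proof (intro allI impI)
      fix \<epsilon> :: real assume e: "0 \<le> \<epsilon> \<and> \<epsilon> < 1/2"
      have "(\<integral>\<^sup>+ r. indicator {0..norm (q_plus \<Omega> y v - y)} r *
            ennreal (bdist \<Omega> (y + r *\<^sub>R v) powr (-1/2 + \<epsilon>)) \<partial>lborel)
          = (\<integral>\<^sup>+ r. indicator {0..\<tau>} r * ennreal (g r powr (-1/2 + \<epsilon>)) \<partial>lborel)"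
        by (simp add: normq g_def)
      also have "\<dots> \<le> ennreal ((2*k*L) powr (-1/2+\<epsilon>) * (2 * (\<tau> - (-\<sigma>)) powr (-1/2+\<epsilon>+1) / (-1/2+\<epsilon>+1)))"
        by (rule tent_integral[OF lomid \<tau>0 A0 _ _ tent ghi]) (use e in auto)
      also have "\<dots> \<le> ennreal C"
      proof (rule ennreal_leI)
        have "(2*k*L) powr (-1/2+\<epsilon>) * (2 * L powr (-1/2+\<epsilon>+1) / (-1/2+\<epsilon>+1)) \<le> 4 * (2*k) powr (-1/2) * D"
          by (rule alg1) (use k e L0 LD D_def in auto)
        thus "(2*k*L) powr (-1/2+\<epsilon>) * (2 * (\<tau> - (-\<sigma>)) powr (-1/2+\<epsilon>+1) / (-1/2+\<epsilon>+1)) \<le> C"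
          unfolding C_def L_def by simp
      qed
      finally show "(\<integral>\<^sup>+ r. indicator {0..norm (q_plus \<Omega> y v - y)} r *
            ennreal (bdist \<Omega> (y + r *\<^sub>R v) powr (-1/2 + \<epsilon>)) \<partial>lborel) \<le> ennreal C" .
    qed
    define \<delta> where "\<delta> = bdist \<Omega> y"
    have \<delta>0: "\<delta> > 0" unfolding \<delta>_def by (rule bdist_pos[OF op y Fne])
    have \<tau>L: "\<tau> \<le> L" using \<sigma>0 L_def by simp
    show part2: "\<forall>\<epsilon>::real. 0 < \<epsilon> \<and> \<epsilon> < 1/2 \<longrightarrow>
        (\<integral>\<^sup>+ r. indicator {0..norm (q_plus \<Omega> y v - y)} r *
            ennreal (bdist \<Omega> (y + r *\<^sub>R v) powr (-1 + \<epsilon>)) \<partial>lborel)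
          \<le> ennreal (C / \<epsilon> * bdist \<Omega> y powr (-1/2 + \<epsilon>))"
    proof (intro allI impI)
      fix \<epsilon> :: real assume e: "0 < \<epsilon> \<and> \<epsilon> < 1/2"
      have "\<exists>A>0. (\<forall>r. 0 \<le> r \<longrightarrow> r < \<tau> \<longrightarrow> A * min (\<tau> - r) (r - (-\<sigma>)) \<le> g r) \<and> A * L \<ge> \<delta> \<and> A * L \<ge> k * L^2"
      proof (cases "\<delta> \<ge> k * L^2")
        case True
        show ?thesis
        proof (intro exI[of _ "\<delta>/\<tau>"] conjI allI impI)
          show "\<delta>/\<tau> > 0" using \<delta>0 \<tau>0 by simp
          have "\<delta> * L / \<tau> \<ge> \<delta>" using \<delta>0 \<tau>0 \<tau>L by (simp add: field_simps)
          thus "\<delta>/\<tau> * L \<ge> \<delta>" by simp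
          thus "\<delta>/\<tau> * L \<ge> k * L^2" using True by simp
          fix r assume r: "0 \<le> r" "r < \<tau>"
          define t where "t = (\<tau> - r)/\<tau>"
          have t: "0 < t" "t \<le> 1" using r \<tau>0 by (auto simp: t_def field_simps)
          have eq: "t *\<^sub>R (y + 0 *\<^sub>R v) + (1-t) *\<^sub>R q = y + r *\<^sub>R v"
          proof -
            have "t*0 + (1-t)*\<tau> = r" using \<tau>0 unfolding t_def by (simp add: field_simps)
            thus ?thesis unfolding q_def comb_eq by simp
          qed
          have "ball (y + 0 *\<^sub>R v) \<delta> \<subseteq> \<Omega>" unfolding \<delta>_def using bdist_ball[OF op y] by simp
          from ball_convex_comb[OF cv op this qC t] eq
          have "ball (y + r *\<^sub>R v) (t * \<delta>) \<subseteq> \<Omega>" by simp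
          hence "t * \<delta> \<le> g r" unfolding g_def by (rule ball_le_bdist[OF op Fne])
          moreover have "t * \<delta> = \<delta>/\<tau> * (\<tau> - r)" by (simp add: t_def)
          ultimately show "\<delta>/\<tau> * min (\<tau> - r) (r - (-\<sigma>)) \<le> g r" using \<delta>0 \<tau>0
            by (smt (verit) min.cobounded1 mult_left_mono divide_pos_pos)
        qed
      next
        case False
        have kLL: "k*L^2 > 0" using k L0 by simp
        have e2: "2*k*L*L = 2*(k*L^2)" by (simp add: power2_eq_square)
        have d1: "\<delta> \<le> 2*k*L*L" using False kLL e2 by linarith
        have d2: "k*L^2 \<le> 2*k*L*L" using kLL e2 by linarith
        show ?thesis
          by (intro exI[of _ "2*k*L"] conjI allI impI tent) (use A0 d1 d2 in auto)
      qed
      then obtain A where A: "A > 0" "\<And>r. 0 \<le> r \<Longrightarrow> r < \<tau> \<Longrightarrow> A * min (\<tau> - r) (r - (-\<sigma>)) \<le> g r"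
          "A * L \<ge> \<delta>" "A * L \<ge> k * L^2" by blast
      have "(\<integral>\<^sup>+ r. indicator {0..norm (q_plus \<Omega> y v - y)} r *
            ennreal (bdist \<Omega> (y + r *\<^sub>R v) powr (-1 + \<epsilon>)) \<partial>lborel)
          = (\<integral>\<^sup>+ r. indicator {0..\<tau>} r * ennreal (g r powr (-1 + \<epsilon>)) \<partial>lborel)"
        by (simp add: normq g_def)
      also have "\<dots> \<le> ennreal (A powr (-1+\<epsilon>) * (2 * (\<tau> - (-\<sigma>)) powr (-1+\<epsilon>+1) / (-1+\<epsilon>+1)))"
        by (rule tent_integral[OF lomid \<tau>0 A(1) _ _ A(2) ghi]) (use e in auto)
      also have "\<dots> \<le> ennreal (C / \<epsilon> * bdist \<Omega> y powr (-1/2 + \<epsilon>))"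
      proof (rule ennreal_leI)
        have a2: "A powr (-1+\<epsilon>) * L powr \<epsilon> \<le> k powr (-1/2) * \<delta> powr (-1/2+\<epsilon>)"
          by (rule alg2) (use A L0 \<delta>0 k e in auto)
        have "A powr (-1+\<epsilon>) * (2 * (\<tau> - (-\<sigma>)) powr (-1+\<epsilon>+1) / (-1+\<epsilon>+1))
            = 2 / \<epsilon> * (A powr (-1+\<epsilon>) * L powr \<epsilon>)" by (simp add: L_def)
        also have "\<dots> \<le> 2 / \<epsilon> * (k powr (-1/2) * \<delta> powr (-1/2+\<epsilon>))"
          using a2 e by (intro mult_left_mono) auto
        also have "\<dots> = (2 * k powr (-1/2)) / \<epsilon> * \<delta> powr (-1/2+\<epsilon>)" by simp
        also have "\<dots> \<le> C / \<epsilon> * \<delta> powr (-1/2+\<epsilon>)"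
          using e unfolding C_def by (intro mult_right_mono divide_right_mono) auto
        finally show "A powr (-1+\<epsilon>) * (2 * (\<tau> - (-\<sigma>)) powr (-1+\<epsilon>+1) / (-1+\<epsilon>+1))
            \<le> C / \<epsilon> * bdist \<Omega> y powr (-1/2 + \<epsilon>)" unfolding \<delta>_def .
      qed
      finally show "(\<integral>\<^sup>+ r. indicator {0..norm (q_plus \<Omega> y v - y)} r *
            ennreal (bdist \<Omega> (y + r *\<^sub>R v) powr (-1 + \<epsilon>)) \<partial>lborel)
          \<le> ennreal (C / \<epsilon> * bdist \<Omega> y powr (-1/2 + \<epsilon>))" .
    qed
  qed
qed



lemma three_simps: "(1::3) + 1 = 2" "(1::3) + 2 = 3" "(2::3) + 1 = 3" "(2::3) + 2 = 1" "(3::3) + 1 = 1" "(3::3) + 2 = 2" "(4::3) = 1" "(5::3) = 2"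
  by simp_all

lemma cof_identity:
  fixes H :: "real^3^3" and a b c d :: "real^3"
  shows "(\<Sum>i\<in>UNIV. \<Sum>j\<in>UNIV. cross3 a b $ i * cross3 c d $ j * cof3 H i j)
     = (a \<bullet> (H *v c)) * (b \<bullet> (H *v d)) - (a \<bullet> (H *v d)) * (b \<bullet> (H *v c))"
  unfolding cof3_def cross3_def inner_vec_def matrix_vector_mult_def
  by (simp add: sum_3 three_simps algebra_simps)



lemma line_deriv1:
  fixes \<rho> :: "real^3 \<Rightarrow> real"
  assumes "\<forall>x\<in>U. (\<rho> has_derivative (\<lambda>h. grad x \<bullet> h)) (at x)" "x + t *\<^sub>R h \<in> U"
  shows "((\<lambda>t. \<rho> (x + t *\<^sub>R h)) has_real_derivative (grad (x + t *\<^sub>R h) \<bullet> h)) (at t)"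
proof -
  have l: "((\<lambda>t. x + t *\<^sub>R h) has_derivative (\<lambda>u. u *\<^sub>R h)) (at t)"
    by (auto intro!: derivative_eq_intros)
  have "((\<rho> \<circ> (\<lambda>t. x + t *\<^sub>R h)) has_derivative ((\<lambda>k. grad (x + t *\<^sub>R h) \<bullet> k) \<circ> (\<lambda>u. u *\<^sub>R h))) (at t)"
    by (rule diff_chain_at[OF l]) (use assms in auto)
  moreover have "((\<lambda>k. grad (x + t *\<^sub>R h) \<bullet> k) \<circ> (\<lambda>u. u *\<^sub>R h)) = (*) (grad (x + t *\<^sub>R h) \<bullet> h)"
    by (auto simp: fun_eq_iff)
  ultimately show ?thesis unfolding has_field_derivative_def by (simp add: comp_def)
qed

lemma line_deriv2:
  fixes grad :: "real^3 \<Rightarrow> real^3"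
  assumes "\<forall>x\<in>U. (grad has_derivative (\<lambda>h. hess x *v h)) (at x)" "x + t *\<^sub>R h \<in> U"
  shows "((\<lambda>t. grad (x + t *\<^sub>R h) \<bullet> k) has_real_derivative ((hess (x + t *\<^sub>R h) *v h) \<bullet> k)) (at t)"
proof -
  have l: "((\<lambda>t. x + t *\<^sub>R h) has_derivative (\<lambda>u. u *\<^sub>R h)) (at t)"
    by (auto intro!: derivative_eq_intros)
  have "((grad \<circ> (\<lambda>t. x + t *\<^sub>R h)) has_derivative ((\<lambda>k. hess (x + t *\<^sub>R h) *v k) \<circ> (\<lambda>u. u *\<^sub>R h))) (at t)"
    by (rule diff_chain_at[OF l]) (use assms in auto)
  hence "((\<lambda>t. (grad \<circ> (\<lambda>t. x + t *\<^sub>R h)) t \<bullet> k) has_derivative (\<lambda>u. ((\<lambda>k. hess (x + t *\<^sub>R h) *v k) \<circ> (\<lambda>u. u *\<^sub>R h)) u \<bullet> k)) (at t)"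
    by (rule bounded_linear.has_derivative[OF bounded_linear_inner_left])
  moreover have "(\<lambda>u. ((\<lambda>k. hess (x + t *\<^sub>R h) *v k) \<circ> (\<lambda>u. u *\<^sub>R h)) u \<bullet> k) = (*) ((hess (x + t *\<^sub>R h) *v h) \<bullet> k)"
    by (auto simp: fun_eq_iff matrix_vector_mult_scaleR)
  ultimately show ?thesis unfolding has_field_derivative_def by (simp add: comp_def)
qed

lemma bil_expand: "(a::real^3) \<bullet> (H *v b) = (\<Sum>i\<in>UNIV. \<Sum>j\<in>UNIV. a$i * H$i$j * b$j)"
  by (simp add: inner_vec_def matrix_vector_mult_def sum_distrib_left mult.assoc)

definition hn :: "real^3^3 \<Rightarrow> real" where "hn H = (\<Sum>i\<in>UNIV. \<Sum>j\<in>UNIV. \<bar>H$i$j\<bar>)"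

lemma hn_nonneg: "hn H \<ge> 0" unfolding hn_def by (intro sum_nonneg) auto

lemma bil_bound: "\<bar>a \<bullet> (H *v b)\<bar> \<le> hn H * norm a * norm b"
proof -
  have "\<bar>a \<bullet> (H *v b)\<bar> \<le> (\<Sum>i\<in>UNIV. \<Sum>j\<in>UNIV. \<bar>a$i * H$i$j * b$j\<bar>)"
    unfolding bil_expand by (rule order_trans[OF sum_abs sum_mono]) (rule sum_abs)
  also have "\<dots> \<le> (\<Sum>i\<in>UNIV. \<Sum>j\<in>UNIV. \<bar>H$i$j\<bar> * (norm a * norm b))"
  proof (intro sum_mono)
    fix i j
    have "\<bar>a$i\<bar> * \<bar>b$j\<bar> \<le> norm a * norm b"
      by (intro mult_mono component_le_norm_cart) auto
    hence "\<bar>H$i$j\<bar> * (\<bar>a$i\<bar> * \<bar>b$j\<bar>) \<le> \<bar>H$i$j\<bar> * (norm a * norm b)"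
      by (intro mult_left_mono) auto
    thus "\<bar>a$i * H$i$j * b$j\<bar> \<le> \<bar>H$i$j\<bar> * (norm a * norm b)"
      by (simp add: abs_mult algebra_simps)
  qed
  also have "\<dots> = hn H * norm a * norm b" unfolding hn_def by (simp add: sum_distrib_right mult.assoc)
  finally show ?thesis .
qed

lemma hn_le_norm: "hn H \<le> 9 * norm H"
proof -
  have "hn H \<le> (\<Sum>i\<in>(UNIV::3 set). \<Sum>j\<in>(UNIV::3 set). norm H)"
    unfolding hn_def
    by (intro sum_mono) (rule order_trans[OF component_le_norm_cart Finite_Cartesian_Product.norm_nth_le])
  thus ?thesis by simp
qed

lemma hn_cont:
  fixes f :: "'a::topological_space \<Rightarrow> real^3^3"
  assumes "continuous_on S f"
  shows "continuous_on S (\<lambda>x. hn (f x))"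
  unfolding hn_def by (intro continuous_intros continuous_on_component assms)

lemma bil_cont:
  fixes f :: "'a::topological_space \<Rightarrow> real^3^3" and a b :: "'a \<Rightarrow> real^3"
  assumes "continuous_on S f" "continuous_on S a" "continuous_on S b"
  shows "continuous_on S (\<lambda>x. a x \<bullet> (f x *v b x))"
proof -
  have eq: "(\<lambda>x. a x \<bullet> (f x *v b x)) = (\<lambda>x. \<Sum>i\<in>UNIV. \<Sum>j\<in>UNIV. a x$i * f x$i$j * b x$j)"
    by (simp add: bil_expand)
  show ?thesis unfolding eq by (intro continuous_intros continuous_on_component assms)
qed




lemma double_diff:
  fixes \<rho> :: "real^3 \<Rightarrow> real"
  assumes d1: "\<forall>x\<in>U. (\<rho> has_derivative (\<lambda>h. grad x \<bullet> h)) (at x)"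
   and d2: "\<forall>x\<in>U. (grad has_derivative (\<lambda>h. hess x *v h)) (at x)"
   and s: "s > 0" and box: "cball x (s * (norm a + norm b)) \<subseteq> U"
  shows "\<exists>\<xi>. dist \<xi> x \<le> s * (norm a + norm b) \<and>
     \<rho> (x + s *\<^sub>R a + s *\<^sub>R b) - \<rho> (x + s *\<^sub>R a) - \<rho> (x + s *\<^sub>R b) + \<rho> x = s^2 * (a \<bullet> (hess \<xi> *v b))"
proof -
  have inU: "x + t *\<^sub>R a + u *\<^sub>R b \<in> U" if "0 \<le> t" "t \<le> s" "0 \<le> u" "u \<le> s" for t u
  proof -
    have "norm (t *\<^sub>R a + u *\<^sub>R b) \<le> t * norm a + u * norm b"
      using that by (metis abs_of_nonneg norm_scaleR norm_triangle_ineq)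
    also have "\<dots> \<le> s * norm a + s * norm b" using that by (intro add_mono mult_right_mono) auto
    finally have "dist (x + (t *\<^sub>R a + u *\<^sub>R b)) x \<le> s * (norm a + norm b)"
      by (simp add: dist_norm distrib_left)
    thus ?thesis using box by (auto simp: dist_commute add.assoc)
  qed
  define \<phi> where "\<phi> t = \<rho> ((x + s *\<^sub>R b) + t *\<^sub>R a) - \<rho> (x + t *\<^sub>R a)" for t
  have "\<exists>t1>0. t1 < s \<and> \<phi> s - \<phi> 0 = (s - 0) * (grad ((x + s *\<^sub>R b) + t1 *\<^sub>R a) \<bullet> a - grad (x + t1 *\<^sub>R a) \<bullet> a)"
  proof (rule MVT2[OF s])
    fix t assume t: "0 \<le> t" "t \<le> s"
    have u1: "(x + s *\<^sub>R b) + t *\<^sub>R a \<in> U" using inU[of t s] t s by (simp add: algebra_simps)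
    have u2: "x + t *\<^sub>R a \<in> U" using inU[of t 0] t s by simp
    show "(\<phi> has_real_derivative grad ((x + s *\<^sub>R b) + t *\<^sub>R a) \<bullet> a - grad (x + t *\<^sub>R a) \<bullet> a) (at t)"
      unfolding \<phi>_def by (intro DERIV_diff line_deriv1[OF d1 u1] line_deriv1[OF d1 u2])
  qed
  then obtain t1 where t1: "0 < t1" "t1 < s"
    "\<phi> s - \<phi> 0 = s * (grad ((x + s *\<^sub>R b) + t1 *\<^sub>R a) \<bullet> a - grad (x + t1 *\<^sub>R a) \<bullet> a)" by auto
  define \<psi> where "\<psi> u = grad ((x + t1 *\<^sub>R a) + u *\<^sub>R b) \<bullet> a" for u
  have "\<exists>u1>0. u1 < s \<and> \<psi> s - \<psi> 0 = (s - 0) * ((hess ((x + t1 *\<^sub>R a) + u1 *\<^sub>R b) *v b) \<bullet> a)"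
  proof (rule MVT2[OF s])
    fix u assume u: "0 \<le> u" "u \<le> s"
    have u1: "(x + t1 *\<^sub>R a) + u *\<^sub>R b \<in> U" using inU[of t1 u] t1 u by simp
    show "(\<psi> has_real_derivative (hess ((x + t1 *\<^sub>R a) + u *\<^sub>R b) *v b) \<bullet> a) (at u)"
      unfolding \<psi>_def by (rule line_deriv2[OF d2 u1])
  qed
  then obtain u1 where u1: "0 < u1" "u1 < s"
    "\<psi> s - \<psi> 0 = s * ((hess ((x + t1 *\<^sub>R a) + u1 *\<^sub>R b) *v b) \<bullet> a)" by auto
  define \<xi> where "\<xi> = x + t1 *\<^sub>R a + u1 *\<^sub>R b"
  have "dist x \<xi> \<le> s * (norm a + norm b)"
  proof -
    have "norm (t1 *\<^sub>R a + u1 *\<^sub>R b) \<le> t1 * norm a + u1 * norm b"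
      using t1 u1 by (metis abs_of_nonneg less_imp_le norm_scaleR norm_triangle_ineq)
    also have "\<dots> \<le> s * norm a + s * norm b" using t1 u1 by (intro add_mono mult_right_mono) auto
    finally have "dist (x + (t1 *\<^sub>R a + u1 *\<^sub>R b)) x \<le> s * (norm a + norm b)"
      by (simp add: dist_norm distrib_left)
    thus ?thesis by (simp add: dist_commute add.assoc \<xi>_def)
  qed
  moreover have "grad ((x + s *\<^sub>R b) + t1 *\<^sub>R a) = grad ((x + t1 *\<^sub>R a) + s *\<^sub>R b)"
    by (simp add: algebra_simps)
  hence "\<phi> s - \<phi> 0 = s * (\<psi> s - \<psi> 0)" using t1(3) by (simp add: \<psi>_def)
  hence "\<rho> (x + s *\<^sub>R a + s *\<^sub>R b) - \<rho> (x + s *\<^sub>R a) - \<rho> (x + s *\<^sub>R b) + \<rho> x = s^2 * (a \<bullet> (hess \<xi> *v b))"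
    using u1(3) unfolding \<phi>_def \<xi>_def by (simp add: algebra_simps power2_eq_square inner_commute)
  ultimately show ?thesis by (auto simp: dist_commute)
qed

lemma hess_sym:
  fixes \<rho> :: "real^3 \<Rightarrow> real"
  assumes U: "open U" and d1: "\<forall>x\<in>U. (\<rho> has_derivative (\<lambda>h. grad x \<bullet> h)) (at x)"
   and d2: "\<forall>x\<in>U. (grad has_derivative (\<lambda>h. hess x *v h)) (at x)"
   and hc: "continuous_on U hess" and x: "x \<in> U"
  shows "a \<bullet> (hess x *v b) = b \<bullet> (hess x *v a)"
proof (rule ccontr)
  assume ne: "a \<bullet> (hess x *v b) \<noteq> b \<bullet> (hess x *v a)"
  define M where "M \<xi> = a \<bullet> (hess \<xi> *v b)" for \<xi>
  define N where "N \<xi> = b \<bullet> (hess \<xi> *v a)" for \<xi>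
  define \<eta> where "\<eta> = \<bar>M x - N x\<bar> / 2"
  have \<eta>: "\<eta> > 0" using ne by (simp add: \<eta>_def M_def N_def)
  have "continuous_on U M" unfolding M_def by (intro bil_cont hc continuous_intros)
  hence "isCont M x" using U x continuous_on_eq_continuous_at by blast
  then obtain d1' where d1': "d1' > 0" "\<And>\<xi>. dist \<xi> x < d1' \<Longrightarrow> dist (M \<xi>) (M x) < \<eta>"
    using \<eta> unfolding continuous_at_eps_delta by blast
  have "continuous_on U N" unfolding N_def by (intro bil_cont hc continuous_intros)
  hence "isCont N x" using U x continuous_on_eq_continuous_at by blast
  then obtain d2' where d2': "d2' > 0" "\<And>\<xi>. dist \<xi> x < d2' \<Longrightarrow> dist (N \<xi>) (N x) < \<eta>"
    using \<eta> unfolding continuous_at_eps_delta by blast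
  obtain r where r: "r > 0" "cball x r \<subseteq> U" using U x open_contains_cball by blast
  define c where "c = norm a + norm b + 1"
  have c: "c > 0" unfolding c_def by (simp add: add_nonneg_pos)
  define s where "s = min (min d1' d2') r / (2 * c)"
  have s: "s > 0" using d1' d2' r c by (simp add: s_def)
  have sc: "s * (norm a + norm b) < min (min d1' d2') r"
  proof -
    have "s * (norm a + norm b) \<le> s * c" using s by (intro mult_left_mono) (auto simp: c_def)
    also have "s * c = min (min d1' d2') r / 2" using c by (simp add: s_def)
    also have "\<dots> < min (min d1' d2') r"
    proof -
      have "min (min d1' d2') r > 0" using d1' d2' r by simp
      thus ?thesis by linarith
    qed
    finally show ?thesis .
  qed
  have box: "cball x (s * (norm a + norm b)) \<subseteq> U" using r sc by auto
  have box': "cball x (s * (norm b + norm a)) \<subseteq> U" using box by (simp add: add.commute)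
  obtain \<xi>1 where \<xi>1: "dist \<xi>1 x \<le> s * (norm a + norm b)"
    "\<rho> (x + s *\<^sub>R a + s *\<^sub>R b) - \<rho> (x + s *\<^sub>R a) - \<rho> (x + s *\<^sub>R b) + \<rho> x = s^2 * M \<xi>1"
    using double_diff[OF d1 d2 s box] unfolding M_def by blast
  obtain \<xi>2 where \<xi>2: "dist \<xi>2 x \<le> s * (norm b + norm a)"
    "\<rho> (x + s *\<^sub>R b + s *\<^sub>R a) - \<rho> (x + s *\<^sub>R b) - \<rho> (x + s *\<^sub>R a) + \<rho> x = s^2 * N \<xi>2"
    using double_diff[OF d1 d2 s box'] unfolding N_def by blast
  have "s^2 * M \<xi>1 = s^2 * N \<xi>2" using \<xi>1(2) \<xi>2(2) by (simp add: algebra_simps)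
  hence MN: "M \<xi>1 = N \<xi>2" using s by simp
  have "dist (M \<xi>1) (M x) < \<eta>" using d1' \<xi>1(1) sc by (intro d1'(2)) auto
  moreover have "dist (N \<xi>2) (N x) < \<eta>" using d2' \<xi>2(1) sc by (intro d2'(2)) (auto simp: add.commute)
  ultimately have "\<bar>M x - N x\<bar> < 2 * \<eta>" using MN by (simp add: dist_real_def)
  thus False by (simp add: \<eta>_def)
qed




lemma decomp:
  fixes H :: "real^3^3" and g h :: "real^3"
  assumes sym: "\<And>a b. a \<bullet> (H *v b) = b \<bullet> (H *v a)" and g0: "g \<noteq> 0" and HB: "hn H \<le> B"
    and pos: "\<And>w. w \<bullet> g = 0 \<Longrightarrow> (H *v w) \<bullet> w \<ge> lam * (norm w)^2" and lam: "lam > 0"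
  shows "(H *v h) \<bullet> h \<ge> (lam/2) * (norm h)^2 - (lam/2 + 2*B^2/lam + B) * ((h \<bullet> g)^2 / (norm g)^2)"
proof -
  have B0: "B \<ge> 0" using HB hn_nonneg order_trans by blast
  define n where "n = (1 / norm g) *\<^sub>R g"
  have nn: "n \<bullet> n = 1" using g0 by (simp add: n_def inner_commute power2_eq_square[symmetric] dot_square_norm)
  have nnorm: "norm n = 1" using g0 by (simp add: n_def)
  define tn where "tn = h \<bullet> n"
  define hT where "hT = h - tn *\<^sub>R n"
  have hTn: "hT \<bullet> n = 0" by (simp add: hT_def tn_def inner_diff_left nn)
  have hTg: "hT \<bullet> g = 0"
  proof -
    have "g = norm g *\<^sub>R n" using g0 by (simp add: n_def)
    thus ?thesis using hTn by (metis inner_scaleR_right mult_zero_right)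
  qed
  have hdec: "h = hT + tn *\<^sub>R n" by (simp add: hT_def)
  define a where "a = norm hT"
  have pyth: "(norm h)^2 = a^2 + tn^2"
  proof -
    have "(norm h)^2 = h \<bullet> h" by (simp add: dot_square_norm)
    also have "\<dots> = hT \<bullet> hT + 2 * tn * (hT \<bullet> n) + tn^2 * (n \<bullet> n)"
      unfolding hdec by (simp add: inner_add_left inner_add_right inner_commute power2_eq_square algebra_simps)
    also have "\<dots> = a^2 + tn^2" using hTn nn by (simp add: a_def dot_square_norm)
    finally show ?thesis .
  qed
  define X where "X = (H *v hT) \<bullet> n"
  have Qexp: "(H *v h) \<bullet> h = (H *v hT) \<bullet> hT + 2 * tn * X + tn^2 * ((H *v n) \<bullet> n)"
  proof -
    have s1: "(H *v n) \<bullet> hT = X" unfolding X_def using sym[of hT n] by (simp add: inner_commute)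
    have "(H *v h) \<bullet> h = (H *v hT) \<bullet> hT + tn * ((H *v hT) \<bullet> n) + tn * ((H *v n) \<bullet> hT) + tn^2 * ((H *v n) \<bullet> n)"
      unfolding hdec by (simp add: matrix_vector_right_distrib matrix_vector_mult_scaleR inner_add_left
          inner_add_right algebra_simps power2_eq_square)
    thus ?thesis using s1 by (simp add: X_def)
  qed
  have QT: "(H *v hT) \<bullet> hT \<ge> lam * a^2" using pos[OF hTg] by (simp add: a_def)
  have Xb: "\<bar>X\<bar> \<le> B * a"
  proof -
    have "\<bar>X\<bar> = \<bar>n \<bullet> (H *v hT)\<bar>" by (simp add: X_def inner_commute)
    also have "\<dots> \<le> hn H * norm n * norm hT" by (rule bil_bound)
    also have "\<dots> \<le> B * a" using HB by (simp add: nnorm a_def mult_right_mono)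
    finally show ?thesis .
  qed
  have Nb: "\<bar>(H *v n) \<bullet> n\<bar> \<le> B"
  proof -
    have "\<bar>(H *v n) \<bullet> n\<bar> = \<bar>n \<bullet> (H *v n)\<bar>" by (simp add: inner_commute)
    also have "\<dots> \<le> hn H * norm n * norm n" by (rule bil_bound)
    also have "\<dots> \<le> B" using HB by (simp add: nnorm)
    finally show ?thesis .
  qed
  have t1: "2 * tn * X \<ge> - (2 * B * (\<bar>tn\<bar> * a))"
  proof -
    have "\<bar>2 * tn * X\<bar> \<le> 2 * \<bar>tn\<bar> * (B * a)" using Xb by (simp add: abs_mult mult_left_mono)
    thus ?thesis by (simp add: algebra_simps)
  qed
  have t2: "tn^2 * ((H *v n) \<bullet> n) \<ge> - (B * tn^2)"
  proof -
    have "\<bar>tn^2 * ((H *v n) \<bullet> n)\<bar> \<le> tn^2 * B" using Nb by (simp add: abs_mult mult_left_mono)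
    thus ?thesis by (simp add: algebra_simps)
  qed
  have sq: "0 \<le> (lam/2) * a^2 - 2 * B * (\<bar>tn\<bar> * a) + (2 * B^2 / lam) * tn^2"
  proof -
    have "0 \<le> (lam/2) * (a - 2 * B * \<bar>tn\<bar> / lam)^2" using lam by simp
    also have "\<dots> = (lam/2) * a^2 - 2 * B * (\<bar>tn\<bar> * a) + (2 * B^2 / lam) * \<bar>tn\<bar>^2"
      using lam by (simp add: power2_eq_square field_simps)
    finally show ?thesis by simp
  qed
  have tng: "(h \<bullet> g)^2 / (norm g)^2 = tn^2"
    using g0 by (simp add: tn_def n_def power2_eq_square)
  have "(H *v h) \<bullet> h \<ge> (lam/2) * (a^2 + tn^2) - (lam/2 + 2*B^2/lam + B) * tn^2"
    using Qexp QT t1 t2 sq by (simp add: algebra_simps)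
  thus ?thesis unfolding tng pyth .
qed




context
  fixes \<Omega> :: "(real^3) set" and U :: "(real^3) set" and \<rho> :: "real^3 \<Rightarrow> real"
    and grad :: "real^3 \<Rightarrow> real^3" and hess :: "real^3 \<Rightarrow> real^3^3"
  assumes op: "open \<Omega>" and bd: "bounded \<Omega>" and cv: "convex \<Omega>" and ne: "\<Omega> \<noteq> {}"
    and DF: "C2_defining_function \<Omega> U \<rho> grad hess"
    and Kpos: "\<forall>x\<in>frontier \<Omega>. level_gauss_curvature (grad x) (hess x) > 0"
begin

lemma openU: "open U" and FU: "frontier \<Omega> \<subseteq> U"
  and d1: "\<forall>x\<in>U. (\<rho> has_derivative (\<lambda>h. grad x \<bullet> h)) (at x)"
  and d2: "\<forall>x\<in>U. (grad has_derivative (\<lambda>h. hess x *v h)) (at x)"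
  and hc: "continuous_on U hess"
  and inO: "\<forall>x\<in>U. x \<in> \<Omega> \<longleftrightarrow> \<rho> x < 0"
  and gnz: "\<forall>x\<in>frontier \<Omega>. grad x \<noteq> 0"
  using DF unfolding C2_defining_function_def by auto

lemma F_compact: "compact (frontier \<Omega>)"
proof -
  have "frontier \<Omega> \<subseteq> closure \<Omega>" by (auto simp: frontier_def)
  hence "bounded (frontier \<Omega>)" using bd bounded_closure bounded_subset by blast
  thus ?thesis by (simp add: compact_eq_bounded_closed)
qed

lemma F_ne: "frontier \<Omega> \<noteq> {}"
proof -
  obtain y0 where y0: "y0 \<in> \<Omega>" using ne by auto
  have "y0 + tau_plus \<Omega> y0 (axis 1 1) *\<^sub>R axis 1 1 \<in> frontier \<Omega>"
    by (rule chord(2)) (use op bd y0 in auto)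
  thus ?thesis by auto
qed

lemma rho_cont: "continuous_on U \<rho>"
  by (rule has_derivative_continuous_on) (use d1 in \<open>blast intro: has_derivative_at_withinI\<close>)

lemma grad_cont: "continuous_on U grad"
  by (rule has_derivative_continuous_on) (use d2 in \<open>blast intro: has_derivative_at_withinI\<close>)

lemma rho_F: assumes p: "p \<in> frontier \<Omega>" shows "\<rho> p = 0"
proof -
  have pU: "p \<in> U" using p FU by auto
  have "p \<notin> \<Omega>" using p op by (simp add: frontier_def interior_open)
  hence ge: "\<rho> p \<ge> 0" using inO pU by auto
  show ?thesis
  proof (rule ccontr)
    assume "\<rho> p \<noteq> 0"
    hence pos: "\<rho> p > 0" using ge by simp
    have "isCont \<rho> p" using rho_cont openU pU continuous_on_eq_continuous_at by blast
    then obtain e where e: "e > 0" "\<And>y. dist y p < e \<Longrightarrow> dist (\<rho> y) (\<rho> p) < \<rho> p"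
      using pos unfolding continuous_at_eps_delta by blast
    obtain e' where e': "e' > 0" "ball p e' \<subseteq> U" using openU pU openE by blast
    have "p \<in> closure \<Omega>" using p by (simp add: frontier_def)
    then obtain y where y: "y \<in> \<Omega>" "dist y p < min e e'"
      unfolding closure_approachable using e e' by (metis min_less_iff_conj)
    have "y \<in> U" using y e' by (auto simp: dist_commute)
    hence "\<rho> y < 0" using inO y by auto
    moreover have "dist (\<rho> y) (\<rho> p) < \<rho> p" using e y by auto
    ultimately show False using pos by (simp add: dist_real_def)
  qed
qed

lemma hsym: "x \<in> U \<Longrightarrow> a \<bullet> (hess x *v b) = b \<bullet> (hess x *v a)"
  by (rule hess_sym[OF openU d1 d2 hc])

lemma taylor2:
  assumes seg: "\<And>t. 0 \<le> t \<Longrightarrow> t \<le> 1 \<Longrightarrow> x + t *\<^sub>R h \<in> U"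
  shows "\<exists>\<xi>. 0 < \<xi> \<and> \<xi> < 1 \<and> \<rho> (x + h) = \<rho> x + grad x \<bullet> h + (1/2) * ((hess (x + \<xi> *\<^sub>R h) *v h) \<bullet> h)"
proof -
  define D where "D m t = (if m = 0 then \<rho> (x + t *\<^sub>R h) else if m = 1 then grad (x + t *\<^sub>R h) \<bullet> h
     else (hess (x + t *\<^sub>R h) *v h) \<bullet> h)" for m :: nat and t
  have "\<exists>t>0. t < 1 \<and> D 0 1 = (\<Sum>m<2. D m 0 / fact m * (1 - 0) ^ m) + D 2 t / fact 2 * (1 - 0) ^ 2"
  proof (rule Taylor_up[of 2 D "D 0" 0 1 0])
    show "\<forall>m t. m < 2 \<and> 0 \<le> t \<and> t \<le> 1 \<longrightarrow> (D m has_real_derivative D (Suc m) t) (at t)"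
    proof (intro allI impI)
      fix m :: nat and t :: real assume mt: "m < 2 \<and> 0 \<le> t \<and> t \<le> 1"
      have xt: "x + t *\<^sub>R h \<in> U" using seg mt by auto
      show "(D m has_real_derivative D (Suc m) t) (at t)"
      proof (cases "m = 0")
        case True
        have "D 0 = (\<lambda>t. \<rho> (x + t *\<^sub>R h))" by (simp add: D_def fun_eq_iff)
        then show ?thesis using True line_deriv1[OF d1 xt] by (simp add: D_def)
      next
        case False
        hence m1: "m = 1" using mt by simp
        have "D 1 = (\<lambda>t. grad (x + t *\<^sub>R h) \<bullet> h)" by (simp add: D_def fun_eq_iff)
        then show ?thesis using m1 line_deriv2[OF d2 xt, of h] by (simp add: D_def)
      qed
    qed
  qed auto
  then obtain t where t: "0 < t" "t < 1"
    "D 0 1 = (\<Sum>m<2. D m 0 / fact m * (1 - 0) ^ m) + D 2 t / fact 2 * (1 - 0) ^ 2" by blast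
  have "(\<Sum>m<2. D m 0 / fact m * (1 - 0) ^ m) = D 0 0 + D 1 0"
    by (simp add: numeral_2_eq_2)
  with t show ?thesis by (intro exI[of _ t]) (simp add: D_def)
qed


lemma mvm_neg: "(A::real^3^3) *v (- x) = - (A *v x)"
  by (simp add: matrix_vector_mult_def vec_eq_iff sum_negf)

lemma notin_F: "p \<in> frontier \<Omega> \<Longrightarrow> p \<notin> \<Omega>"
  using op by (simp add: frontier_def interior_open)

lemma neg_dir:
  assumes p: "p \<in> frontier \<Omega>" and e: "e > 0" "ball p e \<subseteq> U"
    and neg: "\<forall>z\<in>ball p e. (hess z *v w) \<bullet> w < 0"
    and orth: "w \<bullet> grad p = 0" and t: "t > 0" "t * norm w < e"
  shows "p + t *\<^sub>R w \<in> \<Omega>"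
proof -
  have inb: "p + s *\<^sub>R (t *\<^sub>R w) \<in> ball p e" if "0 \<le> s" "s \<le> 1" for s
  proof -
    have "dist (p + s *\<^sub>R (t *\<^sub>R w)) p = s * (t * norm w)" using that t by (simp add: dist_norm)
    also have "\<dots> \<le> t * norm w" using that t by (intro mult_left_le_one_le) auto
    also have "\<dots> < e" using t by simp
    finally show ?thesis by (simp add: dist_commute)
  qed
  obtain \<xi> where \<xi>: "0 < \<xi>" "\<xi> < 1"
    "\<rho> (p + t *\<^sub>R w) = \<rho> p + grad p \<bullet> (t *\<^sub>R w) + (1/2) * ((hess (p + \<xi> *\<^sub>R (t *\<^sub>R w)) *v (t *\<^sub>R w)) \<bullet> (t *\<^sub>R w))"
    using taylor2[of p "t *\<^sub>R w"] inb e(2) by blast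
  define Q' where "Q' = (hess (p + \<xi> *\<^sub>R (t *\<^sub>R w)) *v (t *\<^sub>R w)) \<bullet> (t *\<^sub>R w)"
  have "(hess (p + \<xi> *\<^sub>R (t *\<^sub>R w)) *v w) \<bullet> w < 0" using neg inb[of \<xi>] \<xi> by auto
  hence A: "Q' < 0"
    using t unfolding Q'_def by (simp add: matrix_vector_mult_scaleR mult_neg_pos mult_pos_neg)
  have B: "grad p \<bullet> (t *\<^sub>R w) = 0" using orth by (simp add: inner_commute)
  have C: "\<rho> p = 0" using rho_F[OF p] .
  have "\<rho> (p + t *\<^sub>R w) < 0" using \<xi>(3)[folded Q'_def] A B C by linarith
  moreover have "p + t *\<^sub>R w \<in> U" using inb[of 1] e by auto
  ultimately show ?thesis using inO by auto
qed

lemma PSD: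
  assumes p: "p \<in> frontier \<Omega>" and orth: "w \<bullet> grad p = 0"
  shows "(hess p *v w) \<bullet> w \<ge> 0"
proof (rule ccontr)
  assume "\<not> ?thesis"
  hence neg: "(hess p *v w) \<bullet> w < 0" by simp
  hence w0: "w \<noteq> 0" by auto
  have pU: "p \<in> U" using p FU by auto
  define f where "f z = w \<bullet> (hess z *v w)" for z
  have "continuous_on U f" unfolding f_def by (intro bil_cont hc continuous_intros)
  hence "isCont f p" using openU pU continuous_on_eq_continuous_at by blast
  moreover have fp: "f p < 0" using neg by (simp add: f_def inner_commute)
  ultimately obtain d where d: "d > 0" "\<And>z. dist z p < d \<Longrightarrow> dist (f z) (f p) < - f p"
    unfolding continuous_at_eps_delta by (metis neg_0_less_iff_less)
  obtain e' where e': "e' > 0" "ball p e' \<subseteq> U" using openU pU openE by blast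
  define e where "e = min d e'"
  have e: "e > 0" "ball p e \<subseteq> U" using d e' by (auto simp: e_def)
  have negb: "\<forall>z\<in>ball p e. (hess z *v v) \<bullet> v < 0" if "v = w \<or> v = -w" for v
  proof
    fix z assume "z \<in> ball p e"
    hence "dist z p < d" by (auto simp: e_def dist_commute)
    hence "\<bar>f z - f p\<bar> < - f p" using d(2) by (simp add: dist_real_def)
    hence "f z < 0" by linarith
    thus "(hess z *v v) \<bullet> v < 0" using that by (auto simp: f_def inner_commute mvm_neg)
  qed
  define t where "t = e / (2 * norm w)"
  have t: "t > 0" "t * norm w < e" using e w0 by (auto simp: t_def)
  have "p + t *\<^sub>R w \<in> \<Omega>"
    by (rule neg_dir[OF p e]) (use negb orth t in auto)
  moreover have "p + t *\<^sub>R (-w) \<in> \<Omega>"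
    by (rule neg_dir[OF p e]) (use negb[of "-w"] orth t in \<open>simp_all\<close>)
  ultimately have "(1/2) *\<^sub>R (p + t *\<^sub>R w) + (1 - 1/2) *\<^sub>R (p + t *\<^sub>R (-w)) \<in> \<Omega>"
    using cv unfolding convex_def by (metis (no_types) add_diff_cancel_left' field_sum_of_halves le_add_same_cancel1 less_eq_real_def zero_less_divide_1_iff zero_less_numeral)
  moreover have "(1/2) *\<^sub>R (p + t *\<^sub>R w) + (1 - 1/2) *\<^sub>R (p + t *\<^sub>R (-w)) = p"
    by (simp add: vec_eq_iff field_simps)
  ultimately have "p \<in> \<Omega>" by simp
  thus False using notin_F[OF p] by simp
qed


lemma PD:
  assumes p: "p \<in> frontier \<Omega>" and orth: "w \<bullet> grad p = 0" and w0: "w \<noteq> 0"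
  shows "(hess p *v w) \<bullet> w > 0"
proof (rule ccontr)
  assume "\<not> ?thesis"
  hence Qw: "(hess p *v w) \<bullet> w = 0" using PSD[OF p orth] by simp
  have pU: "p \<in> U" using p FU by auto
  define g where "g = grad p"
  define H where "H = hess p"
  define u where "u = cross3 g w"
  have ug: "u \<bullet> g = 0" unfolding u_def by (rule dot_cross_self(4))
  define B where "B = w \<bullet> (H *v u)"
  define q where "q = (H *v u) \<bullet> u"
  have q0: "q \<ge> 0" unfolding q_def H_def by (rule PSD[OF p]) (use ug g_def in simp)
  have symB: "(H *v w) \<bullet> u = B" using hsym[OF pU, of u w] unfolding B_def H_def by (simp add: inner_commute)
  have symB2: "(H *v u) \<bullet> w = B" unfolding B_def by (simp add: inner_commute)
  have expand: "(H *v (w + s *\<^sub>R u)) \<bullet> (w + s *\<^sub>R u) = 2 * s * B + s^2 * q" for s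
  proof -
    have "(H *v (w + s *\<^sub>R u)) \<bullet> (w + s *\<^sub>R u)
        = (H *v w) \<bullet> w + s * ((H *v w) \<bullet> u) + s * ((H *v u) \<bullet> w) + s^2 * ((H *v u) \<bullet> u)"
      by (simp add: matrix_vector_right_distrib matrix_vector_mult_scaleR inner_add_left inner_add_right
          algebra_simps power2_eq_square)
    thus ?thesis using Qw symB symB2 unfolding q_def H_def by simp
  qed
  have nn: "0 \<le> 2 * s * B + s^2 * q" for s
  proof -
    have "(w + s *\<^sub>R u) \<bullet> grad p = 0" using orth ug by (simp add: inner_add_left g_def)
    from PSD[OF p this] show ?thesis using expand[of s] unfolding H_def by simp
  qed
  define s where "s = - B / (q + 1)"
  have sq: "s * (q+1) = - B" using q0 by (simp add: s_def)
  have "(q+1)^2 * (2 * s * B + s^2 * q) = 2*B*(s*(q+1))*(q+1) + (s*(q+1))^2*q"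
    by (simp add: algebra_simps power2_eq_square)
  also have "\<dots> = - (B^2 * (q + 2))" unfolding sq by (simp add: algebra_simps power2_eq_square)
  finally have "(q+1)^2 * (2 * s * B + s^2 * q) = - (B^2 * (q + 2))" .
  moreover have "0 \<le> (q+1)^2 * (2 * s * B + s^2 * q)" using nn by simp
  ultimately have "B^2 * (q + 2) \<le> 0" by simp
  hence "B^2 \<le> 0" using q0 by (simp add: mult_le_0_iff)
  hence B0: "B = 0" by simp
  have "(\<Sum>i\<in>UNIV. \<Sum>j\<in>UNIV. cross3 w u $ i * cross3 w u $ j * cof3 H i j)
     = (w \<bullet> (H *v w)) * (u \<bullet> (H *v u)) - (w \<bullet> (H *v u)) * (u \<bullet> (H *v w))"
    by (rule cof_identity)
  also have "\<dots> = 0" using Qw B0 unfolding B_def H_def by (simp add: inner_commute)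
  finally have z: "(\<Sum>i\<in>UNIV. \<Sum>j\<in>UNIV. cross3 w u $ i * cross3 w u $ j * cof3 H i j) = 0" .
  have cwu: "cross3 w u = (w \<bullet> w) *\<^sub>R g"
    unfolding u_def Lagrange using orth by (simp add: g_def)
  define c where "c = w \<bullet> w"
  have c0: "c > 0" using w0 by (simp add: c_def)
  have "(\<Sum>i\<in>UNIV. \<Sum>j\<in>UNIV. cross3 w u $ i * cross3 w u $ j * cof3 H i j)
      = c^2 * (\<Sum>i\<in>UNIV. \<Sum>j\<in>UNIV. g $ i * g $ j * cof3 H i j)"
    unfolding cwu c_def[symmetric] by (simp add: sum_distrib_left power2_eq_square algebra_simps)
  moreover have "(\<Sum>i\<in>UNIV. \<Sum>j\<in>UNIV. g $ i * g $ j * cof3 H i j) > 0"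
  proof -
    have K: "level_gauss_curvature g H > 0" using Kpos p unfolding g_def H_def by auto
    have "g \<noteq> 0" using gnz p g_def by auto
    hence "norm g ^ 4 > 0" by simp
    thus ?thesis using K unfolding level_gauss_curvature_def by (simp add: zero_less_divide_iff)
  qed
  ultimately show False using z c0 by simp
qed

lemma lambda_unif:
  "\<exists>lam>0. \<forall>p\<in>frontier \<Omega>. \<forall>w. w \<bullet> grad p = 0 \<longrightarrow> (hess p *v w) \<bullet> w \<ge> lam * (norm w)^2"
proof -
  define S where "S = (frontier \<Omega> \<times> sphere 0 1) \<inter> (\<lambda>z. snd z \<bullet> grad (fst z)) -` {0}"
  have contg: "continuous_on (frontier \<Omega> \<times> sphere 0 1) (\<lambda>z. snd z \<bullet> grad (fst z))"
    by (intro continuous_intros continuous_on_compose2[OF grad_cont]) (use FU in auto)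
  have "closed S" unfolding S_def
    by (rule continuous_closed_preimage[OF contg]) (use F_compact in \<open>auto intro: compact_imp_closed closed_Times\<close>)
  moreover have "bounded S"
  proof -
    have "bounded (frontier \<Omega> \<times> sphere (0::real^3) 1)"
      by (intro bounded_Times compact_imp_bounded F_compact bounded_sphere)
    thus ?thesis unfolding S_def by (meson bounded_subset inf_le1)
  qed
  ultimately have cS: "compact S" by (simp add: compact_eq_bounded_closed)
  have SU: "fst ` S \<subseteq> U" using FU by (auto simp: S_def)
  have contQ: "continuous_on S (\<lambda>z. snd z \<bullet> (hess (fst z) *v snd z))"
    by (intro bil_cont continuous_intros continuous_on_compose2[OF hc] SU)
  have scale: "(hess p *v w) \<bullet> w = (norm w)^2 * ((hess p *v ((1/norm w) *\<^sub>R w)) \<bullet> ((1/norm w) *\<^sub>R w))"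
    if "w \<noteq> 0" for p w
    using that by (simp add: matrix_vector_mult_scaleR power2_eq_square)
  show ?thesis
  proof (cases "S = {}")
    case True
    show ?thesis
    proof (intro exI[of _ 1] conjI ballI allI impI)
      fix p w assume p: "p \<in> frontier \<Omega>" and o: "w \<bullet> grad p = 0"
      show "(hess p *v w) \<bullet> w \<ge> 1 * (norm w)^2"
      proof (cases "w = 0")
        case False
        have "(p, (1/norm w) *\<^sub>R w) \<in> S" using p o False by (simp add: S_def)
        then show ?thesis using True by simp
      qed simp
    qed simp
  next
    case False
    obtain z0 where z0: "z0 \<in> S" "\<forall>z\<in>S. snd z0 \<bullet> (hess (fst z0) *v snd z0) \<le> snd z \<bullet> (hess (fst z) *v snd z)"
      using continuous_attains_inf[OF cS False contQ] by blast
    define lam where "lam = snd z0 \<bullet> (hess (fst z0) *v snd z0)"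
    have "lam > 0"
    proof -
      have "fst z0 \<in> frontier \<Omega>" "snd z0 \<bullet> grad (fst z0) = 0" "snd z0 \<noteq> 0" using z0(1) by (auto simp: S_def)
      from PD[OF this] show ?thesis by (simp add: lam_def inner_commute)
    qed
    moreover have "\<forall>p\<in>frontier \<Omega>. \<forall>w. w \<bullet> grad p = 0 \<longrightarrow> (hess p *v w) \<bullet> w \<ge> lam * (norm w)^2"
    proof (intro ballI allI impI)
      fix p w assume p: "p \<in> frontier \<Omega>" and o: "w \<bullet> grad p = 0"
      show "(hess p *v w) \<bullet> w \<ge> lam * (norm w)^2"
      proof (cases "w = 0")
        case False
        have "(p, (1/norm w) *\<^sub>R w) \<in> S" using p o False by (simp add: S_def)
        hence "lam \<le> ((1/norm w) *\<^sub>R w) \<bullet> (hess p *v ((1/norm w) *\<^sub>R w))"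
          using z0(2) unfolding lam_def by fastforce
        hence "lam \<le> (hess p *v ((1/norm w) *\<^sub>R w)) \<bullet> ((1/norm w) *\<^sub>R w)" by (simp add: inner_commute)
        hence "(norm w)^2 * lam \<le> (norm w)^2 * ((hess p *v ((1/norm w) *\<^sub>R w)) \<bullet> ((1/norm w) *\<^sub>R w))"
          by (intro mult_left_mono) auto
        thus ?thesis using scale[OF False] by (simp add: mult.commute)
      qed simp
    qed
    ultimately show ?thesis by blast
  qed
qed


lemma inK: "p \<in> frontier \<Omega> \<Longrightarrow> dist x p \<le> e \<Longrightarrow> infdist x (frontier \<Omega>) \<le> e"
  by (rule infdist_le2)

lemma near_core:
  assumes e0: "e0 > 0" and KU: "\<And>x. infdist x (frontier \<Omega>) \<le> e0 \<Longrightarrow> x \<in> U"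
   and Bb: "\<And>x. infdist x (frontier \<Omega>) \<le> e0 \<Longrightarrow> hn (hess x) \<le> B"
   and Gb: "\<And>x. infdist x (frontier \<Omega>) \<le> e0 \<Longrightarrow> norm (grad x) \<le> G" and G: "G > 0"
   and g0: "g0 > 0" "\<And>p. p \<in> frontier \<Omega> \<Longrightarrow> norm (grad p) \<ge> g0"
   and lam: "lam > 0" "\<And>p w. p \<in> frontier \<Omega> \<Longrightarrow> w \<bullet> grad p = 0 \<Longrightarrow> (hess p *v w) \<bullet> w \<ge> lam * (norm w)^2"
   and uc: "\<And>x x'. infdist x (frontier \<Omega>) \<le> e0 \<Longrightarrow> infdist x' (frontier \<Omega>) \<le> e0 \<Longrightarrow> dist x' x < \<delta>
              \<Longrightarrow> hn (hess x' - hess x) \<le> lam/8"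
   and p: "p \<in> frontier \<Omega>" and q: "q \<in> frontier \<Omega>" and pq: "dist p q \<le> r0"
   and r0: "r0 \<le> 1" "r0 \<le> e0/2" "r0 < \<delta>"
     "(lam/2 + 2*B^2/lam + B) * B^2 / (4 * g0^2) * r0 \<le> lam/8" "lam/(64*G) * r0 \<le> e0/2"
  shows "ball ((1/2) *\<^sub>R (p + q)) (lam/(64*G) * (dist p q)^2) \<subseteq> \<Omega>"
proof (cases "p = q")
  case True
  then show ?thesis by simp
next
  case False
  define h where "h = q - p"
  define nh where "nh = norm h"
  have nhd: "nh = dist p q" by (simp add: nh_def h_def dist_norm norm_minus_commute)
  have nh0: "nh > 0" using False by (simp add: nh_def h_def)
  have nhr: "nh \<le> r0" using pq nhd by simp
  have nh1: "nh \<le> 1" using nhr r0 by simp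
  have nhsq: "nh^2 \<le> nh" using nh0 nh1 by (simp add: power2_eq_square mult_le_cancel_left1)
  have B0: "B \<ge> 0" using Bb[of p] p hn_nonneg[of "hess p"] infdist_zero[of p "frontier \<Omega>"] e0 by fastforce
  have qph: "q = p + h" by (simp add: h_def)
  have segK: "infdist (p + t *\<^sub>R h) (frontier \<Omega>) \<le> e0" if "0 \<le> t" "t \<le> 1" for t
  proof -
    have "dist (p + t *\<^sub>R h) p = t * nh" using that by (simp add: dist_norm nh_def)
    also have "\<dots> \<le> nh" using that nh0 by (simp add: mult_left_le_one_le)
    finally show ?thesis by (intro inK[OF p]) (use nhr r0 e0 in linarith)
  qed
  have segd: "dist (p + t *\<^sub>R h) p \<le> nh" if "0 \<le> t" "t \<le> 1" for t
  proof -
    have "dist (p + t *\<^sub>R h) p = t * nh" using that by (simp add: dist_norm nh_def)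
    also have "\<dots> \<le> nh" using that nh0 by (simp add: mult_left_le_one_le)
    finally show ?thesis .
  qed
  have Qbound: "\<bar>(hess x *v v) \<bullet> v\<bar> \<le> B * (norm v)^2" if "infdist x (frontier \<Omega>) \<le> e0" for x v
  proof -
    have "\<bar>(hess x *v v) \<bullet> v\<bar> = \<bar>v \<bullet> (hess x *v v)\<bar>" by (simp add: inner_commute)
    also have "\<dots> \<le> hn (hess x) * norm v * norm v" by (rule bil_bound)
    also have "\<dots> \<le> B * (norm v)^2" using Bb[of x] that by (simp add: power2_eq_square mult.assoc mult_right_mono)
    finally show ?thesis .
  qed
  obtain \<xi>0 where \<xi>0: "0 < \<xi>0" "\<xi>0 < 1"
    "\<rho> (p + h) = \<rho> p + grad p \<bullet> h + (1/2) * ((hess (p + \<xi>0 *\<^sub>R h) *v h) \<bullet> h)"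
    using taylor2[of p h] segK KU by blast
  have gh: "grad p \<bullet> h = - (1/2) * ((hess (p + \<xi>0 *\<^sub>R h) *v h) \<bullet> h)"
    using \<xi>0(3) rho_F[OF p] rho_F[OF q] qph by simp
  have gh2: "(grad p \<bullet> h)^2 \<le> B^2 * (nh^2 * nh^2) / 4"
  proof -
    have "\<bar>grad p \<bullet> h\<bar> \<le> (1/2) * (B * nh^2)"
      using gh Qbound[OF segK, of \<xi>0 h] \<xi>0 by (simp add: nh_def abs_mult)
    hence "(grad p \<bullet> h)^2 \<le> ((1/2) * (B * nh^2))^2"
      by (metis abs_ge_zero power2_abs power_mono)
    thus ?thesis by (simp add: power2_eq_square field_simps)
  qed
  define C1 where "C1 = lam/2 + 2*B^2/lam + B"
  have C1: "C1 \<ge> 0" using lam B0 by (simp add: C1_def)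
  have gp: "grad p \<noteq> 0" using gnz p by auto
  have pU: "p \<in> U" using p FU by auto
  have Qp: "(hess p *v h) \<bullet> h \<ge> (lam/2) * nh^2 - C1 * ((h \<bullet> grad p)^2 / (norm (grad p))^2)"
    unfolding C1_def nh_def
    by (rule decomp[OF hsym[OF pU] gp]) (use Bb[of p] segK[of 0] lam p in auto)
  have "C1 * ((h \<bullet> grad p)^2 / (norm (grad p))^2) \<le> C1 * ((B^2 * (nh^2 * nh^2) / 4) / g0^2)"
  proof (intro mult_left_mono C1 frac_le)
    show "(h \<bullet> grad p)^2 \<le> B^2 * (nh^2 * nh^2) / 4" using gh2 by (simp add: inner_commute)
    show "g0^2 \<le> (norm (grad p))^2" using g0 p by (simp add: power_mono)
  qed (use g0 in auto)
  also have "\<dots> = ((lam/2 + 2*B^2/lam + B) * B^2 / (4 * g0^2)) * nh^2 * nh^2"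
    by (simp add: C1_def power2_eq_square field_simps)
  also have "\<dots> \<le> ((lam/2 + 2*B^2/lam + B) * B^2 / (4 * g0^2)) * r0 * nh^2"
  proof -
    have "nh^2 \<le> r0" using nhsq nhr by simp
    moreover have "(lam/2 + 2*B^2/lam + B) * B^2 / (4 * g0^2) \<ge> 0" using C1 C1_def g0 by simp
    ultimately show ?thesis by (intro mult_right_mono mult_left_mono) auto
  qed
  also have "\<dots> \<le> lam/8 * nh^2" using r0(4) by (intro mult_right_mono) auto
  finally have Qp2: "(hess p *v h) \<bullet> h \<ge> (3*lam/8) * nh^2" using Qp by simp
  have Qseg: "(hess (p + t *\<^sub>R h) *v h) \<bullet> h \<ge> (lam/4) * nh^2" if "0 \<le> t" "t \<le> 1" for t
  proof -
    have pK: "infdist p (frontier \<Omega>) \<le> e0" using segK[of 0] by simp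
    have "dist (p + t *\<^sub>R h) p < \<delta>" using segd[OF that] nhr r0 by simp
    hence hd: "hn (hess (p + t *\<^sub>R h) - hess p) \<le> lam/8" using uc[OF pK segK[OF that]] by simp
    have "\<bar>((hess (p + t *\<^sub>R h) - hess p) *v h) \<bullet> h\<bar> \<le> lam/8 * nh^2"
    proof -
      have "\<bar>((hess (p + t *\<^sub>R h) - hess p) *v h) \<bullet> h\<bar> = \<bar>h \<bullet> ((hess (p + t *\<^sub>R h) - hess p) *v h)\<bar>"
        by (simp add: inner_commute)
      also have "\<dots> \<le> hn (hess (p + t *\<^sub>R h) - hess p) * norm h * norm h" by (rule bil_bound)
      also have "\<dots> \<le> lam/8 * nh^2" using mult_right_mono[OF hd, of "(norm h)^2"] by (simp add: nh_def power2_eq_square mult.assoc)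
      finally show ?thesis .
    qed
    moreover have "((hess (p + t *\<^sub>R h) - hess p) *v h) \<bullet> h = (hess (p + t *\<^sub>R h) *v h) \<bullet> h - (hess p *v h) \<bullet> h"
      by (simp add: matrix_vector_mult_diff_rdistrib inner_diff_left)
    ultimately show ?thesis using Qp2 by linarith
  qed
  define m where "m = p + (1/2) *\<^sub>R h"
  have mid: "(1/2) *\<^sub>R (p + q) = m" by (simp add: m_def h_def vec_eq_iff field_simps)
  obtain s1 where s1: "0 < s1" "s1 < 1"
    "\<rho> (m + (1/2) *\<^sub>R h) = \<rho> m + grad m \<bullet> ((1/2) *\<^sub>R h) + (1/2) * ((hess (m + s1 *\<^sub>R ((1/2) *\<^sub>R h)) *v ((1/2) *\<^sub>R h)) \<bullet> ((1/2) *\<^sub>R h))"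
  proof -
    have "m + t *\<^sub>R ((1/2) *\<^sub>R h) \<in> U" if "0 \<le> t" "t \<le> 1" for t
    proof -
      have "m + t *\<^sub>R ((1/2) *\<^sub>R h) = p + ((1+t)/2) *\<^sub>R h" by (simp add: m_def algebra_simps add_divide_distrib)
      thus ?thesis using KU segK[of "(1+t)/2"] that by simp
    qed
    thus ?thesis using taylor2[of m "(1/2) *\<^sub>R h"] that by blast
  qed
  obtain s2 where s2: "0 < s2" "s2 < 1"
    "\<rho> (m + (-(1/2)) *\<^sub>R h) = \<rho> m + grad m \<bullet> ((-(1/2)) *\<^sub>R h) + (1/2) * ((hess (m + s2 *\<^sub>R ((-(1/2)) *\<^sub>R h)) *v ((-(1/2)) *\<^sub>R h)) \<bullet> ((-(1/2)) *\<^sub>R h))"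
  proof -
    have "m + t *\<^sub>R ((-(1/2)) *\<^sub>R h) \<in> U" if "0 \<le> t" "t \<le> 1" for t
    proof -
      have "m + t *\<^sub>R ((-(1/2)) *\<^sub>R h) = p + ((1-t)/2) *\<^sub>R h" by (simp add: m_def algebra_simps diff_divide_distrib)
      thus ?thesis using KU segK[of "(1-t)/2"] that by simp
    qed
    thus ?thesis using taylor2[of m "(-(1/2)) *\<^sub>R h"] that by blast
  qed
  have e1: "m + (1/2) *\<^sub>R h = q" by (simp add: m_def qph)
  have e2: "m + (-(1/2)) *\<^sub>R h = p" by (simp add: m_def)
  have x1: "m + s1 *\<^sub>R ((1/2) *\<^sub>R h) = p + ((1+s1)/2) *\<^sub>R h" by (simp add: m_def algebra_simps add_divide_distrib)
  have x2: "m + s2 *\<^sub>R ((-(1/2)) *\<^sub>R h) = p + ((1-s2)/2) *\<^sub>R h" by (simp add: m_def algebra_simps diff_divide_distrib)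
  define Q1 where "Q1 = (hess (p + ((1+s1)/2) *\<^sub>R h) *v h) \<bullet> h"
  define Q2 where "Q2 = (hess (p + ((1-s2)/2) *\<^sub>R h) *v h) \<bullet> h"
  have Q1: "Q1 \<ge> (lam/4) * nh^2" unfolding Q1_def by (rule Qseg) (use s1 in auto)
  have Q2: "Q2 \<ge> (lam/4) * nh^2" unfolding Q2_def by (rule Qseg) (use s2 in auto)
  have r1: "0 = \<rho> m + grad m \<bullet> ((1/2) *\<^sub>R h) + (1/8) * Q1"
    using s1(3) unfolding e1 x1 Q1_def rho_F[OF q] by (simp add: matrix_vector_mult_scaleR)
  have r2: "0 = \<rho> m - grad m \<bullet> ((1/2) *\<^sub>R h) + (1/8) * Q2"
    using s2(3) unfolding e2 x2 Q2_def rho_F[OF p] by (simp add: matrix_vector_mult_scaleR mvm_neg)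
  have rhom: "\<rho> m \<le> - (lam/32) * nh^2" using r1 r2 Q1 Q2 by linarith
  show ?thesis
  proof
    fix z assume z: "z \<in> ball ((1/2) *\<^sub>R (p + q)) (lam/(64*G) * (dist p q)^2)"
    hence zm: "dist z m < lam/(64*G) * nh^2" using mid nhd by (simp add: dist_commute)
    have small: "lam/(64*G) * nh^2 \<le> e0/2"
    proof -
      have "lam/(64*G) * nh^2 \<le> lam/(64*G) * r0" using nhsq nhr lam G by (intro mult_left_mono) auto
      thus ?thesis using r0(5) by linarith
    qed
    have segz: "infdist (m + t *\<^sub>R (z - m)) (frontier \<Omega>) \<le> e0" if "0 \<le> t" "t \<le> 1" for t
    proof -
      have a1: "dist (m + t *\<^sub>R (z - m)) p \<le> dist (m + t *\<^sub>R (z - m)) m + dist m p" by (rule dist_triangle)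
      have a2: "dist (m + t *\<^sub>R (z - m)) m = t * dist z m" using that by (simp add: dist_norm)
      have a3: "t * dist z m \<le> dist z m" using that by (simp add: mult_left_le_one_le)
      have a4: "dist m p = nh/2" by (simp add: m_def dist_norm nh_def)
      have "dist (m + t *\<^sub>R (z - m)) p \<le> e0" using a1 a2 a3 a4 zm small nhr r0 nh0 by linarith
      thus ?thesis by (rule inK[OF p, rotated])
    qed
    obtain t where t: "0 < t" "t < 1"
      "\<rho> (m + 1 *\<^sub>R (z - m)) - \<rho> (m + 0 *\<^sub>R (z - m)) = (1 - 0) * (grad (m + t *\<^sub>R (z - m)) \<bullet> (z - m))"
      using MVT2[of 0 1 "\<lambda>t. \<rho> (m + t *\<^sub>R (z - m))" "\<lambda>t. grad (m + t *\<^sub>R (z - m)) \<bullet> (z - m)"]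
        line_deriv1[OF d1] segz KU by auto
    have "grad (m + t *\<^sub>R (z - m)) \<bullet> (z - m) \<le> norm (grad (m + t *\<^sub>R (z - m))) * norm (z - m)"
      by (rule norm_cauchy_schwarz)
    also have "\<dots> \<le> G * norm (z - m)" using Gb segz[of t] t by (intro mult_right_mono) auto
    also have "\<dots> \<le> G * (lam/(64*G) * nh^2)" using zm G by (intro mult_left_mono) (simp_all add: dist_norm)
    also have "\<dots> = (lam/64) * nh^2" using G by simp
    finally have "\<rho> z - \<rho> m \<le> (lam/64) * nh^2" using t(3) by simp
    moreover have "0 < lam/64 * nh^2" using lam nh0 by simp
    moreover have "- (lam/32) * nh^2 = -2 * (lam/64 * nh^2)" by simp
    ultimately have "\<rho> z < 0" using rhom by linarith
    moreover have "z \<in> U" using KU segz[of 1] by simp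
    ultimately show "z \<in> \<Omega>" using inO by auto
  qed
qed


lemma aux_cancel: fixes a x c :: real assumes "a \<noteq> 0" shows "a * (x/(c*a)) = x/c"
  using assms by simp

lemma near:
  "\<exists>r0>0. \<exists>\<kappa>1>0. \<forall>p\<in>frontier \<Omega>. \<forall>q\<in>frontier \<Omega>. dist p q \<le> r0 \<longrightarrow>
      ball ((1/2) *\<^sub>R (p + q)) (\<kappa>1 * (dist p q)^2) \<subseteq> \<Omega>"
proof -
  obtain e0 where e0: "e0 > 0" "{x. infdist x (frontier \<Omega>) \<le> e0} \<subseteq> U"
    using compact_in_open_separated[OF F_ne F_compact openU FU] by blast
  define K where "K = {x. infdist x (frontier \<Omega>) \<le> e0}"
  have cK: "compact K" unfolding K_def by (rule compact_infdist_le[OF F_ne F_compact e0(1)])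
  have KU: "K \<subseteq> U" using e0 K_def by simp
  have hcK: "continuous_on K hess" using continuous_on_subset[OF hc KU] .
  have gcK: "continuous_on K grad" using continuous_on_subset[OF grad_cont KU] .
  have "bounded ((\<lambda>x. hn (hess x)) ` K)"
    by (intro compact_imp_bounded compact_continuous_image hn_cont hcK cK)
  then obtain B0 where B0: "\<forall>y\<in>(\<lambda>x. hn (hess x)) ` K. \<bar>y\<bar> \<le> B0" unfolding bounded_real by blast
  define B where "B = max B0 1"
  have Bb: "hn (hess x) \<le> B" if "x \<in> K" for x using B0 that unfolding B_def by fastforce
  have "bounded ((\<lambda>x. norm (grad x)) ` K)"
    by (intro compact_imp_bounded compact_continuous_image continuous_on_norm gcK cK)
  then obtain G0 where G0: "\<forall>y\<in>(\<lambda>x. norm (grad x)) ` K. \<bar>y\<bar> \<le> G0" unfolding bounded_real by blast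
  define G where "G = max G0 1"
  have Gb: "norm (grad x) \<le> G" if "x \<in> K" for x using G0 that unfolding G_def by fastforce
  have G: "G > 0" by (simp add: G_def)
  obtain p0 where p0: "p0 \<in> frontier \<Omega>" "\<forall>p\<in>frontier \<Omega>. norm (grad p0) \<le> norm (grad p)"
    using continuous_attains_inf[OF F_compact F_ne, of "\<lambda>x. norm (grad x)"]
      continuous_on_norm[OF continuous_on_subset[OF grad_cont FU]] by blast
  define g0 where "g0 = norm (grad p0)"
  have g0: "g0 > 0" using gnz p0 by (simp add: g0_def)
  obtain lam where lam: "lam > 0" "\<forall>p\<in>frontier \<Omega>. \<forall>w. w \<bullet> grad p = 0 \<longrightarrow> (hess p *v w) \<bullet> w \<ge> lam * (norm w)^2"
    using lambda_unif by blast
  have "uniformly_continuous_on K hess" by (rule compact_uniformly_continuous[OF hcK cK])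
  then obtain \<delta> where \<delta>: "\<delta> > 0" "\<forall>x\<in>K. \<forall>x'\<in>K. dist x' x < \<delta> \<longrightarrow> dist (hess x') (hess x) < lam/72"
    unfolding uniformly_continuous_on_def using lam(1) by (metis divide_pos_pos zero_less_numeral)
  have uc: "hn (hess x' - hess x) \<le> lam/8"
    if "infdist x (frontier \<Omega>) \<le> e0" "infdist x' (frontier \<Omega>) \<le> e0" "dist x' x < \<delta>" for x x'
  proof -
    have "dist (hess x') (hess x) < lam/72" using \<delta> that K_def by auto
    hence "9 * norm (hess x' - hess x) \<le> lam/8" by (simp add: dist_norm)
    thus ?thesis using hn_le_norm[of "hess x' - hess x"] by linarith
  qed
  define C2 where "C2 = (lam/2 + 2*B^2/lam + B) * B^2 / (4 * g0^2)"
  have C2: "C2 \<ge> 0" using lam B_def g0 by (simp add: C2_def)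
  define \<kappa>1 where "\<kappa>1 = lam/(64*G)"
  have \<kappa>1: "\<kappa>1 > 0" using lam G by (simp add: \<kappa>1_def)
  define r0 where "r0 = min (min 1 (e0/2)) (min (\<delta>/2) (min (lam/(8*(C2+1))) (e0/(2*(\<kappa>1+1)))))"
  have r0: "r0 > 0" using e0 \<delta> lam C2 \<kappa>1 by (simp add: r0_def)
  have m1: "r0 \<le> min 1 (e0/2)" "r0 \<le> min (\<delta>/2) (min (lam/(8*(C2+1))) (e0/(2*(\<kappa>1+1))))"
    unfolding r0_def by (rule min.cobounded1, rule min.cobounded2)
  hence m2: "r0 \<le> 1" "r0 \<le> e0/2" "r0 \<le> \<delta>/2" "r0 \<le> lam/(8*(C2+1))" "r0 \<le> e0/(2*(\<kappa>1+1))"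
    by simp_all
  have r01: "r0 \<le> 1" "r0 \<le> e0/2" "r0 < \<delta>" using m2 \<delta> by linarith+
  have r0C: "C2 * r0 \<le> lam/8"
  proof -
    have "C2 * r0 \<le> C2 * (lam/(8*(C2+1)))" using C2 m2 by (intro mult_left_mono) auto
    also have "\<dots> \<le> (C2+1) * (lam/(8*(C2+1)))" using lam C2 by (intro mult_right_mono) auto
    also have "\<dots> = lam/8" using aux_cancel[of "C2+1" lam 8] C2 by (simp add: mult.commute)
    finally show ?thesis .
  qed
  have r0k: "\<kappa>1 * r0 \<le> e0/2"
  proof -
    have "\<kappa>1 * r0 \<le> \<kappa>1 * (e0/(2*(\<kappa>1+1)))" using \<kappa>1 m2 by (intro mult_left_mono) auto
    also have "\<dots> \<le> (\<kappa>1+1) * (e0/(2*(\<kappa>1+1)))" using e0 \<kappa>1 by (intro mult_right_mono) auto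
    also have "\<dots> = e0/2" using aux_cancel[of "\<kappa>1+1" e0 2] \<kappa>1 by (simp add: mult.commute)
    finally show ?thesis .
  qed
  have main: "\<forall>p\<in>frontier \<Omega>. \<forall>q\<in>frontier \<Omega>. dist p q \<le> r0 \<longrightarrow>
      ball ((1/2) *\<^sub>R (p + q)) (\<kappa>1 * (dist p q)^2) \<subseteq> \<Omega>"
  proof (intro ballI impI)
    fix p q assume p: "p \<in> frontier \<Omega>" and q: "q \<in> frontier \<Omega>" and pq: "dist p q \<le> r0"
    show "ball ((1/2) *\<^sub>R (p + q)) (\<kappa>1 * (dist p q)^2) \<subseteq> \<Omega>"
      unfolding \<kappa>1_def
      by (rule near_core[OF e0(1) _ _ _ G g0 _ lam(1) _ uc p q pq r01])
         (use e0 K_def Bb Gb p0 g0_def lam r0C r0k C2_def \<kappa>1_def in auto)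
  qed
  show ?thesis using main r0 \<kappa>1 by blast
qed


lemma mid_in:
  assumes p: "p \<in> frontier \<Omega>" and q: "q \<in> frontier \<Omega>" and pq: "p \<noteq> q"
  shows "(1/2) *\<^sub>R (p + q) \<in> \<Omega>"
proof (rule ccontr)
  assume nm: "(1/2) *\<^sub>R (p + q) \<notin> \<Omega>"
  define m where "m = (1/2) *\<^sub>R (p + q)"
  obtain r0 \<kappa>1 where r0: "r0 > 0" "\<kappa>1 > 0"
    and nr: "\<And>p q. p \<in> frontier \<Omega> \<Longrightarrow> q \<in> frontier \<Omega> \<Longrightarrow> dist p q \<le> r0 \<Longrightarrow>
      ball ((1/2) *\<^sub>R (p + q)) (\<kappa>1 * (dist p q)^2) \<subseteq> \<Omega>"
    using near by blast
  have dj: "\<Omega> \<inter> {m} = {}" using nm m_def by auto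
  obtain a b where ab: "a \<noteq> 0" "\<forall>x\<in>\<Omega>. a \<bullet> x \<le> b" "\<forall>x\<in>{m}. b \<le> a \<bullet> x"
    using separating_hyperplane_sets[OF cv convex_singleton ne insert_not_empty dj] by blast
  have strict: "a \<bullet> x < b" if xO: "x \<in> \<Omega>" for x
  proof (rule ccontr)
    assume "\<not> a \<bullet> x < b"
    hence xb: "a \<bullet> x \<ge> b" by simp
    obtain e where e: "e > 0" "ball x e \<subseteq> \<Omega>" using op xO openE by blast
    have na: "norm a > 0" using ab(1) by simp
    define c where "c = e / (2 * norm a)"
    have c: "c > 0" using e na by (simp add: c_def)
    define y where "y = x + c *\<^sub>R a"
    have "dist x y = c * norm a" using c by (simp add: y_def dist_norm)
    also have "\<dots> = e/2" using na by (simp add: c_def)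
    finally have "dist x y < e" using e by simp
    hence "y \<in> \<Omega>" using e by auto
    hence le: "a \<bullet> y \<le> b" using ab(2) by blast
    have "a \<bullet> y = a \<bullet> x + c * (a \<bullet> a)" by (simp add: y_def inner_add_right)
    moreover have "a \<bullet> a > 0" using ab(1) by simp
    moreover have "c * (a \<bullet> a) > 0" using c calculation(2) by simp
    ultimately show False using le xb by linarith
  qed
  have cl: "a \<bullet> x \<le> b" if "x \<in> closure \<Omega>" for x
  proof -
    have "closed {x. a \<bullet> x \<le> b}" by (rule closed_halfspace_le)
    moreover have "\<Omega> \<subseteq> {x. a \<bullet> x \<le> b}" using ab by auto
    ultimately have "closure \<Omega> \<subseteq> {x. a \<bullet> x \<le> b}" by (rule closure_minimal[rotated])
    thus ?thesis using that by auto
  qed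
  have pc: "p \<in> closure \<Omega>" and qc: "q \<in> closure \<Omega>" using p q by (auto simp: frontier_def)
  have bm: "b \<le> a \<bullet> m" using ab by simp
  have am: "a \<bullet> m = (a \<bullet> p + a \<bullet> q) / 2" by (simp add: m_def inner_add_right)
  have ap: "a \<bullet> p = b" using bm am cl[OF pc] cl[OF qc] by simp
  have aq: "a \<bullet> q = b" using bm am cl[OF pc] cl[OF qc] by simp
  have segF: "p + t *\<^sub>R (q - p) \<in> frontier \<Omega>" if "0 \<le> t" "t \<le> 1" for t
  proof -
    have "convex (closure \<Omega>)" using cv by (rule convex_closure)
    hence "(1 - t) *\<^sub>R p + t *\<^sub>R q \<in> closure \<Omega>" using pc qc that by (simp add: convex_def)
    moreover have "(1 - t) *\<^sub>R p + t *\<^sub>R q = p + t *\<^sub>R (q - p)" by (simp add: algebra_simps)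
    ultimately have c: "p + t *\<^sub>R (q - p) \<in> closure \<Omega>" by simp
    have "a \<bullet> (p + t *\<^sub>R (q - p)) = b" using ap aq by (simp add: inner_add_right inner_diff_right)
    hence "p + t *\<^sub>R (q - p) \<notin> \<Omega>"
    proof -
      assume eqb: "a \<bullet> (p + t *\<^sub>R (q - p)) = b"
      show ?thesis
      proof
        assume "p + t *\<^sub>R (q - p) \<in> \<Omega>"
        from strict[OF this] eqb show False by simp
      qed
    qed
    thus ?thesis using c op by (simp add: frontier_def interior_open)
  qed
  define t where "t = min 1 (r0 / dist p q)"
  have dpq: "dist p q > 0" using pq by simp
  have t: "0 < t" "t \<le> 1" using r0 dpq by (auto simp: t_def)
  define q' where "q' = p + t *\<^sub>R (q - p)"
  have q'F: "q' \<in> frontier \<Omega>" unfolding q'_def by (rule segF) (use t in auto)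
  have dq': "dist p q' = t * dist p q" using t by (simp add: q'_def dist_norm norm_minus_commute)
  have "dist p q' \<le> r0"
  proof -
    have "t * dist p q \<le> (r0 / dist p q) * dist p q" using dpq by (intro mult_right_mono) (auto simp: t_def)
    thus ?thesis using dq' dpq by simp
  qed
  from nr[OF p q'F this]
  have "ball ((1/2) *\<^sub>R (p + q')) (\<kappa>1 * (dist p q')^2) \<subseteq> \<Omega>" .
  moreover have "\<kappa>1 * (dist p q')^2 > 0" using r0 dq' t dpq by simp
  ultimately have "(1/2) *\<^sub>R (p + q') \<in> \<Omega>" by (metis centre_in_ball subsetD)
  moreover have "(1/2) *\<^sub>R (p + q') = p + (t/2) *\<^sub>R (q - p)" by (simp add: q'_def vec_eq_iff field_simps)
  moreover have "p + (t/2) *\<^sub>R (q - p) \<in> frontier \<Omega>" by (rule segF) (use t in auto)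
  ultimately show False using notin_F by auto
qed

lemma UC:
  "\<exists>\<kappa>>0. \<forall>p\<in>frontier \<Omega>. \<forall>q\<in>frontier \<Omega>. ball ((1/2) *\<^sub>R (p + q)) (\<kappa> * (dist p q)^2) \<subseteq> \<Omega>"
proof -
  obtain r0 \<kappa>1 where r0: "r0 > 0" "\<kappa>1 > 0"
    and nr: "\<And>p q. p \<in> frontier \<Omega> \<Longrightarrow> q \<in> frontier \<Omega> \<Longrightarrow> dist p q \<le> r0 \<Longrightarrow>
      ball ((1/2) *\<^sub>R (p + q)) (\<kappa>1 * (dist p q)^2) \<subseteq> \<Omega>"
    using near by blast
  define P where "P = {z \<in> frontier \<Omega> \<times> frontier \<Omega>. r0 \<le> dist (fst z) (snd z)}"
  have "closed P"
  proof -
    have "closed (frontier \<Omega> \<times> frontier \<Omega>)" using F_compact by (intro closed_Times compact_imp_closed)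
    moreover have "continuous_on (frontier \<Omega> \<times> frontier \<Omega>) (\<lambda>z. dist (fst z) (snd z))"
      by (intro continuous_intros)
    ultimately have "closed ((frontier \<Omega> \<times> frontier \<Omega>) \<inter> (\<lambda>z. dist (fst z) (snd z)) -` {r0..})"
      by (intro continuous_closed_preimage) auto
    moreover have "P = (frontier \<Omega> \<times> frontier \<Omega>) \<inter> (\<lambda>z. dist (fst z) (snd z)) -` {r0..}"
      by (auto simp: P_def)
    ultimately show ?thesis by simp
  qed
  moreover have "P \<subseteq> frontier \<Omega> \<times> frontier \<Omega>" by (auto simp: P_def)
  ultimately have cP: "compact P"
  proof -
    assume a: "closed P" "P \<subseteq> frontier \<Omega> \<times> frontier \<Omega>"
    have "compact (frontier \<Omega> \<times> frontier \<Omega>)" by (intro compact_Times F_compact)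
    from compact_Int_closed[OF this a(1)] a(2) show ?thesis by (simp add: Int_absorb1)
  qed
  have "\<exists>d0>0. \<forall>z\<in>P. d0 \<le> infdist ((1/2) *\<^sub>R (fst z + snd z)) (frontier \<Omega>)"
  proof (cases "P = {}")
    case True then show ?thesis by (intro exI[of _ 1]) auto
  next
    case False
    have "continuous_on P (\<lambda>z. infdist ((1/2) *\<^sub>R (fst z + snd z)) (frontier \<Omega>))"
      by (intro continuous_on_infdist continuous_intros)
    then obtain z0 where z0: "z0 \<in> P" "\<forall>z\<in>P. infdist ((1/2) *\<^sub>R (fst z0 + snd z0)) (frontier \<Omega>)
        \<le> infdist ((1/2) *\<^sub>R (fst z + snd z)) (frontier \<Omega>)"
      using continuous_attains_inf[OF cP False] by blast
    have "fst z0 \<in> frontier \<Omega>" "snd z0 \<in> frontier \<Omega>" "fst z0 \<noteq> snd z0"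
      using z0(1) r0 by (auto simp: P_def)
    from mid_in[OF this] have mi: "(1/2) *\<^sub>R (fst z0 + snd z0) \<in> \<Omega>" .
    have "infdist ((1/2) *\<^sub>R (fst z0 + snd z0)) (frontier \<Omega>) > 0"
      using bdist_pos[OF op mi F_ne] unfolding bdist_def .
    thus ?thesis using z0 by blast
  qed
  then obtain d0 where d0: "d0 > 0" "\<And>z. z \<in> P \<Longrightarrow> d0 \<le> infdist ((1/2) *\<^sub>R (fst z + snd z)) (frontier \<Omega>)"
    by blast
  have "bounded (frontier \<Omega>)" using F_compact by (rule compact_imp_bounded)
  then obtain D0 where D0: "\<And>p q. p \<in> frontier \<Omega> \<Longrightarrow> q \<in> frontier \<Omega> \<Longrightarrow> dist p q \<le> D0"
    unfolding bounded_two_points by blast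
  define D where "D = max D0 1"
  have D: "D > 0" by (simp add: D_def)
  define \<kappa> where "\<kappa> = min \<kappa>1 (d0 / D^2)"
  have \<kappa>: "\<kappa> > 0" using r0 d0 D by (simp add: \<kappa>_def)
  have "\<forall>p\<in>frontier \<Omega>. \<forall>q\<in>frontier \<Omega>. ball ((1/2) *\<^sub>R (p + q)) (\<kappa> * (dist p q)^2) \<subseteq> \<Omega>"
  proof (intro ballI)
    fix p q assume p: "p \<in> frontier \<Omega>" and q: "q \<in> frontier \<Omega>"
    show "ball ((1/2) *\<^sub>R (p + q)) (\<kappa> * (dist p q)^2) \<subseteq> \<Omega>"
    proof (cases "dist p q \<le> r0")
      case True
      have "\<kappa> * (dist p q)^2 \<le> \<kappa>1 * (dist p q)^2" by (intro mult_right_mono) (auto simp: \<kappa>_def)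
      hence "ball ((1/2) *\<^sub>R (p + q)) (\<kappa> * (dist p q)^2) \<subseteq> ball ((1/2) *\<^sub>R (p + q)) (\<kappa>1 * (dist p q)^2)"
        by (rule subset_ball)
      then show ?thesis using nr[OF p q True] by blast
    next
      case False
      hence "(p, q) \<in> P" using p q by (simp add: P_def)
      hence dd: "d0 \<le> bdist \<Omega> ((1/2) *\<^sub>R (p + q))" using d0(2)[of "(p, q)"] by (simp add: bdist_def)
      have "dist p q \<le> D" using D0[OF p q] by (simp add: D_def)
      hence "(dist p q)^2 \<le> D^2" by (intro power_mono) auto
      hence "\<kappa> * (dist p q)^2 \<le> (d0 / D^2) * D^2"
        using \<kappa> d0 by (intro mult_mono) (auto simp: \<kappa>_def)
      also have "\<dots> = d0" using D by simp
      finally have "\<kappa> * (dist p q)^2 \<le> bdist \<Omega> ((1/2) *\<^sub>R (p + q))" using dd by linarith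
      hence "ball ((1/2) *\<^sub>R (p + q)) (\<kappa> * (dist p q)^2) \<subseteq> ball ((1/2) *\<^sub>R (p + q)) (bdist \<Omega> ((1/2) *\<^sub>R (p + q)))"
        by (rule subset_ball)
      moreover have "(1/2) *\<^sub>R (p + q) \<in> \<Omega>"
        using mid_in[OF p q] False r0 by (metis dist_self less_eq_real_def)
      ultimately show ?thesis using bdist_ball[OF op] by blast
    qed
  qed
  thus ?thesis using \<kappa> by blast
qed

end

theorem mainTheorem15:
  fixes \<Omega> :: "(real^3) set"
  assumes "open \<Omega>" and "connected \<Omega>" and "\<Omega> \<noteq> {}"
    and "bounded \<Omega>" and "convex \<Omega>"
    and "C2_boundary_pos_gauss \<Omega>"
  shows "\<exists>C::real. \<forall>y\<in>\<Omega>. \<forall>v::real^3. norm v = 1 \<longrightarrow>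
     (\<forall>\<epsilon>::real. 0 \<le> \<epsilon> \<and> \<epsilon> < 1/2 \<longrightarrow>
        (\<integral>\<^sup>+ r. indicator {0..norm (q_plus \<Omega> y v - y)} r *
            ennreal (bdist \<Omega> (y + r *\<^sub>R v) powr (-1/2 + \<epsilon>)) \<partial>lborel) \<le> ennreal C) \<and>
     (\<forall>\<epsilon>::real. 0 < \<epsilon> \<and> \<epsilon> < 1/2 \<longrightarrow>
        (\<integral>\<^sup>+ r. indicator {0..norm (q_plus \<Omega> y v - y)} r *
            ennreal (bdist \<Omega> (y + r *\<^sub>R v) powr (-1 + \<epsilon>)) \<partial>lborel)
          \<le> ennreal (C / \<epsilon> * bdist \<Omega> y powr (-1/2 + \<epsilon>)))"
proof -
  from assms(6) obtain U \<rho> grad hess where DF: "C2_defining_function \<Omega> U \<rho> grad hess"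
    and K: "\<forall>x\<in>frontier \<Omega>. level_gauss_curvature (grad x) (hess x) > 0"
    unfolding C2_boundary_pos_gauss_def by blast
  obtain \<kappa> where \<kappa>: "\<kappa> > 0"
    "\<forall>p\<in>frontier \<Omega>. \<forall>q\<in>frontier \<Omega>. ball ((1/2) *\<^sub>R (p + q)) (\<kappa> * (dist p q)^2) \<subseteq> \<Omega>"
    using UC[OF assms(1) assms(4) assms(5) assms(3) DF K] by blast
  show ?thesis
    by (rule main_from_UC[OF assms(1) assms(4) assms(5) assms(3) \<kappa>(1)]) (use \<kappa>(2) in blast)
qed

end
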